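(* Let $(E,C)$ be a finite bipartite separated graph. If $(E,C)$ has the Linking Property, then $\theta^{(E,C)}$ is topologically transitive. If $\Omega(E,C)$ is a Cantor space (has no isolated points), the converse also holds.
   Context: Separated graph $(E,C)$: $E=(E^0,E^1,r,s)$, $C=\bigsqcup_vC_v$ with $C_v$ a partition of $r^{-1}(v)$ into non-empty sets; $X_e$ is the element of $C$ containing $e$. Finite bipartite: $E$ finite, $E^0=E^{0,0}\sqcup E^{0,1}$, $s(E^1)=E^{0,1}$, $r(E^1)=E^{0,0}$. Admissible paths: words $\sigma_m\cdots\sigma_1$ in $E^1\sqcup(E^1)^{-1}$ forming a path in the double graph ($e^{-1}$ goes from $r(e)$ to $s(e)$; paths are read right to left) with no subword $ef^{-1}$ with $e=f$ and no subword $e^{-1}f$ with $X_e=X_f$; vertices are trivial admissible paths. $\mathfrak t_d(\alpha)$ denotes the terminal (leftmost) letter of a non-trivial admissible path. Configuration space: $\mathbb F$ = free group on $E^1$; $\Omega(E,C)$ = set of $\xi\subseteq\mathbb F$ with $1\in\xi$, right-convex (if a reduced word $e_m^{\varepsilon_m}\cdots e_1^{\varepsilon_1}\in\xi$ then $e_k^{\varepsilon_k}\cdots e_1^{\varepsilon_1}\in\xi$ for $k<m$), and such that for every $\alpha\in\xi$ the set $\xi_\alpha=\{\sigma:\sigma\alpha\in\xi\}$ equals $s^{-1}(v)$ for some $v\in E^{0,1}$ or $\{e_X^{-1}:X\in C_v\}$ for some $v\in E^{0,0}$, $e_X\in X$; topology from $\{0,1\}^{\mathbb F}$; $\theta^{(E,C)}$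 has domains $\Omega(E,C)_\alpha=\{\xi:\alpha^{-1}\in\xi\}$ and $\theta_\alpha(\xi)=\xi\alpha^{-1}$. Balls: for $n\ge1$, $\xi^n=\{\alpha\in\xi:|\alpha|\le n\}$, $\mathcal B_n(\Omega(E,C))=\{\xi^n:\xi\in\Omega(E,C)\}$, $\mathcal B(\Omega(E,C))=\bigcup_{n\ge1}\mathcal B_n$. The boundary of a ball $B$ is $\partial B=\{\mathfrak t_d(\alpha):\alpha\in B\text{ maximal}\}$, where $\alpha\in B$ is maximal if there is no $\sigma$ with $\sigma\alpha\in B$ and $|\sigma\alpha|>|\alpha|$. Two sets $A,A'\subseteq E^1\cup(E^1)^{-1}$ can be linked if there are $\sigma\in A$, $\sigma'\in A'$ and an admissible path $\alpha$ (possibly trivial) such that the concatenation $\sigma^{-1}\alpha\sigma'$ (without cancellation) is an admissible path. $(E,C)$ has the Linking Property if $\partial B$ and $\partial B'$ can be linked for any two balls $B,B'\in\mathcal B(\Omega(E,C))$. A partial action $\theta\colon G\curvearrowright\Omega$ (with $\Omega_g$ the domain of $\theta_{g^{-1}}$) is topologically transitive if for any non-empty open $U,U'\subseteq\Omega$ there is $g\in G$ with $\theta_g(U\cap\Omega_{g^{-1}})\cap U'\ne\emptyset$. *)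

theory Defs
  imports "HOL-Analysis.Analysis"
begin

text \<open>A letter is an edge together with an orientation: (e, True) is e, (e, False) is e^-1.
  A word sigma_m ... sigma_1 is stored as the list [sigma_m, ..., sigma_1]
  (head = leftmost letter).\<close>

type_synonym 'e letter = "'e \<times> bool"
type_synonym 'e word = "'e letter list"

record ('v, 'e) sep_graph =
  V00 :: "'v set"
  V01 :: "'v set"
  Edges :: "'e set"
  rg :: "'e \<Rightarrow> 'v"
  sr :: "'e \<Rightarrow> 'v"
  Cs :: "'v \<Rightarrow> 'e set set"

definition Verts :: "('v, 'e) sep_graph \<Rightarrow> 'v set" where
  "Verts G = V00 G \<union> V01 G"

definition separated_graph :: "('v, 'e) sep_graph \<Rightarrow> bool" where
  "separated_graph G \<longleftrightarrow>
     rg G ` Edges G \<subseteq> Verts G \<and> sr G ` Edges G \<subseteq> Verts G \<and>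
     (\<forall>v \<in> Verts G.
        (\<forall>X \<in> Cs G v. X \<noteq> {}) \<and>
        \<Union>(Cs G v) = {e \<in> Edges G. rg G e = v} \<and>
        (\<forall>X \<in> Cs G v. \<forall>Y \<in> Cs G v. X \<noteq> Y \<longrightarrow> X \<inter> Y = {}))"

definition finite_bipartite :: "('v, 'e) sep_graph \<Rightarrow> bool" where
  "finite_bipartite G \<longleftrightarrow>
     separated_graph G \<and> finite (Verts G) \<and> finite (Edges G) \<and>
     V00 G \<inter> V01 G = {} \<and>
     sr G ` Edges G = V01 G \<and> rg G ` Edges G = V00 G"

definition Xof :: "('v, 'e) sep_graph \<Rightarrow> 'e \<Rightarrow> 'e set" where
  "Xof G e = (THE X. X \<in> Cs G (rg G e) \<and> e \<in> X)"

definition letters :: "('v, 'e) sep_graph \<Rightarrow> 'e letter set" where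
  "letters G = Edges G \<times> UNIV"

definition linv :: "'e letter \<Rightarrow> 'e letter" where
  "linv x = (fst x, \<not> snd x)"

definition winv :: "'e word \<Rightarrow> 'e word" where
  "winv w = rev (map linv w)"

fun red :: "'e word \<Rightarrow> 'e word" where
  "red [] = []"
| "red (x # xs) = (case red xs of [] \<Rightarrow> [x]
                     | y # ys \<Rightarrow> (if y = linv x then ys else x # y # ys))"

definition reduced :: "'e word \<Rightarrow> bool" where
  "reduced w \<longleftrightarrow> (\<forall>i. Suc i < length w \<longrightarrow> w ! Suc i \<noteq> linv (w ! i))"

definition wmult :: "'e word \<Rightarrow> 'e word \<Rightarrow> 'e word" where
  "wmult u v = red (u @ v)"

definition FG :: "('v, 'e) sep_graph \<Rightarrow> 'e word set" where
  "FG G = {w. set w \<subseteq> letters G \<and> reduced w}"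

definition xi_at :: "('v, 'e) sep_graph \<Rightarrow> 'e word set \<Rightarrow> 'e word \<Rightarrow> 'e letter set" where
  "xi_at G \<xi> \<alpha> = {\<sigma> \<in> letters G. wmult [\<sigma>] \<alpha> \<in> \<xi>}"

definition local_ok :: "('v, 'e) sep_graph \<Rightarrow> 'e letter set \<Rightarrow> bool" where
  "local_ok G A \<longleftrightarrow>
     (\<exists>v \<in> V01 G. A = {(e, True) | e. e \<in> Edges G \<and> sr G e = v}) \<or>
     (\<exists>v \<in> V00 G. \<exists>ch. (\<forall>X \<in> Cs G v. ch X \<in> X) \<and> A = (\<lambda>X. (ch X, False)) ` Cs G v)"

definition Omega :: "('v, 'e) sep_graph \<Rightarrow> 'e word set set" where
  "Omega G = {\<xi>. \<xi> \<subseteq> FG G \<and> [] \<in> \<xi> \<and>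
                 (\<forall>w \<in> \<xi>. \<forall>k. drop k w \<in> \<xi>) \<and>
                 (\<forall>\<alpha> \<in> \<xi>. local_ok G (xi_at G \<xi> \<alpha>))}"

text \<open>Topology induced from {0,1}^F (product of discrete spaces), via the identification
  of a subset of F with its characteristic function.\<close>
definition Omega_top :: "('v, 'e) sep_graph \<Rightarrow> 'e word set topology" where
  "Omega_top G = pullback_topology (Omega G) (\<lambda>\<xi>. restrict (\<lambda>w. w \<in> \<xi>) (FG G))
                   (product_topology (\<lambda>_. discrete_topology (UNIV :: bool set)) (FG G))"

text \<open>Partial action: Omega_g = {xi. g^-1 in xi} (the domain of theta_{g^-1}),
  theta_g(xi) = xi g^-1.\<close>
definition Omega_dom :: "('v, 'e) sep_graph \<Rightarrow> 'e word \<Rightarrow> 'e word set set" where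
  "Omega_dom G g = {\<xi> \<in> Omega G. winv g \<in> \<xi>}"

definition theta :: "'e word \<Rightarrow> 'e word set \<Rightarrow> 'e word set" where
  "theta g \<xi> = (\<lambda>\<beta>. wmult \<beta> (winv g)) ` \<xi>"

text \<open>Topological transitivity of a partial action of a group (carrier Grp, inversion ginv)
  on a space T, where dm g is the domain of act (ginv g).\<close>
definition top_transitive ::
  "'a topology \<Rightarrow> 'g set \<Rightarrow> ('g \<Rightarrow> 'g) \<Rightarrow> ('g \<Rightarrow> 'a set) \<Rightarrow> ('g \<Rightarrow> 'a \<Rightarrow> 'a) \<Rightarrow> bool" where
  "top_transitive T Grp ginv dm act \<longleftrightarrow>
     (\<forall>U U'. openin T U \<longrightarrow> openin T U' \<longrightarrow> U \<noteq> {} \<longrightarrow> U' \<noteq> {} \<longrightarrow>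
        (\<exists>g \<in> Grp. act g ` (U \<inter> dm (ginv g)) \<inter> U' \<noteq> {}))"

definition theta_top_transitive :: "('v, 'e) sep_graph \<Rightarrow> bool" where
  "theta_top_transitive G \<longleftrightarrow> top_transitive (Omega_top G) (FG G) winv (Omega_dom G) theta"

definition no_isolated_points :: "'a topology \<Rightarrow> bool" where
  "no_isolated_points T \<longleftrightarrow> (\<forall>x \<in> topspace T. \<not> openin T {x})"

definition lsrc :: "('v, 'e) sep_graph \<Rightarrow> 'e letter \<Rightarrow> 'v" where
  "lsrc G x = (if snd x then sr G (fst x) else rg G (fst x))"

definition ltgt :: "('v, 'e) sep_graph \<Rightarrow> 'e letter \<Rightarrow> 'v" where
  "ltgt G x = (if snd x then rg G (fst x) else sr G (fst x))"

text \<open>Condition on an adjacent pair x y (x immediately to the left of y, i.e. the path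
  traverses y then x).\<close>
definition adm_pair :: "('v, 'e) sep_graph \<Rightarrow> 'e letter \<Rightarrow> 'e letter \<Rightarrow> bool" where
  "adm_pair G x y \<longleftrightarrow>
     lsrc G x = ltgt G y \<and>
     \<not> (snd x \<and> \<not> snd y \<and> fst x = fst y) \<and>
     \<not> (\<not> snd x \<and> snd y \<and> Xof G (fst x) = Xof G (fst y))"

text \<open>Non-trivial admissible paths (non-empty words). Trivial admissible paths are vertices.\<close>
definition admissible :: "('v, 'e) sep_graph \<Rightarrow> 'e word \<Rightarrow> bool" where
  "admissible G w \<longleftrightarrow> w \<noteq> [] \<and> set w \<subseteq> letters G \<and>
     (\<forall>i. Suc i < length w \<longrightarrow> adm_pair G (w ! i) (w ! Suc i))"

definition ball_n :: "nat \<Rightarrow> 'e word set \<Rightarrow> 'e word set" where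
  "ball_n n \<xi> = {\<alpha> \<in> \<xi>. length \<alpha> \<le> n}"

definition balls :: "('v, 'e) sep_graph \<Rightarrow> 'e word set set" where
  "balls G = {ball_n n \<xi> | n \<xi>. n \<ge> 1 \<and> \<xi> \<in> Omega G}"

definition maximal_in :: "('v, 'e) sep_graph \<Rightarrow> 'e word set \<Rightarrow> 'e word \<Rightarrow> bool" where
  "maximal_in G B \<alpha> \<longleftrightarrow> \<alpha> \<in> B \<and>
     \<not> (\<exists>\<sigma> \<in> letters G. wmult [\<sigma>] \<alpha> \<in> B \<and> length (wmult [\<sigma>] \<alpha>) > length \<alpha>)"

definition boundary :: "('v, 'e) sep_graph \<Rightarrow> 'e word set \<Rightarrow> 'e letter set" where
  "boundary G B = {hd \<alpha> | \<alpha>. maximal_in G B \<alpha> \<and> \<alpha> \<noteq> []}"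

definition can_be_linked :: "('v, 'e) sep_graph \<Rightarrow> 'e letter set \<Rightarrow> 'e letter set \<Rightarrow> bool" where
  "can_be_linked G A A' \<longleftrightarrow>
     (\<exists>\<sigma> \<in> A. \<exists>\<sigma>' \<in> A'. \<exists>\<alpha>. (\<alpha> = [] \<or> admissible G \<alpha>) \<and>
        admissible G ([linv \<sigma>] @ \<alpha> @ [\<sigma>']))"

definition linking_property :: "('v, 'e) sep_graph \<Rightarrow> bool" where
  "linking_property G \<longleftrightarrow>
     (\<forall>B \<in> balls G. \<forall>B' \<in> balls G. can_be_linked G (boundary G B) (boundary G B'))"

end

theory Submission
  imports Defs
begin

lemma linv_linv[simp]: "linv (linv x) = x" by (simp add: linv_def)
lemma linv_neq[simp]: "linv x \<noteq> x" "x \<noteq> linv x" by (auto simp: linv_def prod_eq_iff)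
lemma linv_inj[simp]: "(linv x = linv y) = (x = y)" by (metis linv_linv)
lemma fst_linv[simp]: "fst (linv x) = fst x" and snd_linv[simp]: "snd (linv x) = (\<not> snd x)"
  by (auto simp: linv_def)

lemma winv_Nil[simp]: "winv [] = []" by (simp add: winv_def)
lemma winv_Cons[simp]: "winv (x # w) = winv w @ [linv x]" by (simp add: winv_def)
lemma winv_append[simp]: "winv (u @ v) = winv v @ winv u" by (simp add: winv_def)
lemma winv_winv[simp]: "winv (winv w) = w" by (simp add: winv_def rev_map comp_def)
lemma length_winv[simp]: "length (winv w) = length w" by (simp add: winv_def)
lemma winv_eq_Nil[simp]: "(winv w = []) = (w = [])" by (simp add: winv_def)
lemma set_winv: "set (winv w) = linv ` set w" by (simp add: winv_def)
lemma hd_winv: "w \<noteq> [] \<Longrightarrow> hd (winv w) = linv (last w)"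
  by (simp add: winv_def hd_rev last_map)
lemma last_winv: "w \<noteq> [] \<Longrightarrow> last (winv w) = linv (hd w)"
  by (simp add: winv_def last_rev hd_map)

lemma reduced_Nil[simp]: "reduced []" by (simp add: reduced_def)
lemma reduced_Cons: "reduced (x # xs) \<longleftrightarrow> reduced xs \<and> (xs = [] \<or> hd xs \<noteq> linv x)"
  unfolding reduced_def
  apply (cases xs)
   apply simp
  apply (auto simp: nth_Cons split: nat.splits)
  done
lemma reduced_single[simp]: "reduced [x]" by (simp add: reduced_Cons)

lemma reduced_append: "reduced (u @ v) \<longleftrightarrow> reduced u \<and> reduced v \<and> (u = [] \<or> v = [] \<or> hd v \<noteq> linv (last u))"
  by (induction u) (auto simp: reduced_Cons)

lemma reduced_drop: "reduced w \<Longrightarrow> reduced (drop k w)"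
  by (metis append_take_drop_id reduced_append)
lemma reduced_take: "reduced w \<Longrightarrow> reduced (take k w)"
  by (metis append_take_drop_id reduced_append)

lemma reduced_winv[simp]: "reduced (winv w) = reduced w"
proof (induction w)
  case (Cons x w) then show ?case
    by (auto simp: reduced_append reduced_Cons last_winv)
qed simp

lemma reduced_glue: "reduced (u @ [x]) \<Longrightarrow> reduced (x # v) \<Longrightarrow> reduced (u @ x # v)"
  by (auto simp: reduced_append reduced_Cons)

definition push :: "'e letter \<Rightarrow> 'e word \<Rightarrow> 'e word" where
  "push x w = (case w of [] \<Rightarrow> [x] | y # ys \<Rightarrow> (if y = linv x then ys else x # y # ys))"

lemma red_Cons': "red (x # xs) = push x (red xs)" by (simp add: push_def)
declare red.simps(2)[simp del]

lemma reduced_push: "reduced w \<Longrightarrow> reduced (push x w)"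
  by (auto simp: push_def reduced_Cons split: list.splits)

lemma red_reduced[simp]: "reduced (red w)"
  by (induction w) (auto simp: red_Cons' reduced_push)

lemma push_reduced_Cons: "reduced (x # w) \<Longrightarrow> push x w = x # w"
  by (auto simp: push_def reduced_Cons split: list.splits)

lemma red_id: "reduced w \<Longrightarrow> red w = w"
  by (induction w) (auto simp: red_Cons' reduced_Cons push_reduced_Cons push_def split: list.splits)

lemma set_push: "set (push x w) \<subseteq> insert x (set w)"
  by (auto simp: push_def split: list.splits)

lemma set_red: "set (red w) \<subseteq> set w"
  by (induction w) (auto simp: red_Cons' dest!: set_mp[OF set_push])

lemma red_append_red_right: "red (xs @ red ys) = red (xs @ ys)"
  by (induction xs) (auto simp: red_Cons' red_id)

lemma push_linv: "reduced w \<Longrightarrow> push x (push (linv x) w) = w"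
  by (auto simp: push_def reduced_Cons split: list.splits)

lemma red_push: "reduced w \<Longrightarrow> red (push x w @ ys) = push x (red (w @ ys))"
proof (cases "w \<noteq> [] \<and> hd w = linv x")
  case True
  assume r: "reduced w"
  then obtain w' where w: "w = linv x # w'" using True by (cases w) auto
  have "push x w = w'" using w by (simp add: push_def)
  moreover have "push x (red (w @ ys)) = red (w' @ ys)"
    using w by (simp add: red_Cons' push_linv)
  ultimately show ?thesis by simp
next
  case False
  assume r: "reduced w"
  then have "push x w = x # w" using False by (auto simp: push_def split: list.splits)
  then show ?thesis by (simp add: red_Cons')
qed

lemma red_append_red_left: "red (red xs @ ys) = red (xs @ ys)"
  by (induction xs) (auto simp: red_Cons' red_push red_id)

lemma red_cancel: "red (w @ winv w @ ys) = red ys"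
proof (induction w arbitrary: ys)
  case (Cons x w)
  have "red ((x # w) @ winv (x # w) @ ys) = push x (red (w @ winv w @ (linv x # ys)))"
    by (simp add: red_Cons')
  also have "\<dots> = push x (push (linv x) (red ys))" using Cons by (simp add: red_Cons')
  also have "\<dots> = red ys" by (simp add: push_linv)
  finally show ?case .
qed simp

lemma red_cancel': "red (winv w @ w @ ys) = red ys"
  using red_cancel[of "winv w"] by simp

lemma red_cancel_right: "red (u @ h @ winv h) = red u"
  by (metis append_Nil2 red_append_red_right red_cancel red.simps(1))

lemma red_cancel_right': "red (u @ winv h @ h) = red u"
  using red_cancel_right[of u "winv h"] by simp

lemma red_single_app: "reduced y \<Longrightarrow> red ([x] @ y) = push x y"
  by (simp add: red_Cons' red_id)

lemma length_push: "length (push x w) \<le> Suc (length w)"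
  by (auto simp: push_def split: list.splits)

lemma push_cases: "reduced y \<Longrightarrow> (y \<noteq> [] \<and> x = linv (hd y) \<and> push x y = tl y) \<or> (push x y = x # y \<and> (y = [] \<or> x \<noteq> linv (hd y)))"
  by (cases y) (auto simp: push_def)

lemma cancel_struct:
  "reduced u \<Longrightarrow> reduced v \<Longrightarrow> \<exists>u1 c v1. u = u1 @ c \<and> v = winv c @ v1 \<and> red (u @ v) = u1 @ v1"
proof (induction u)
  case Nil then have "red ([] @ v) = [] @ v" by (simp add: red_id)
  then show ?case by (metis append_Nil winv_Nil)
next
  case (Cons x u)
  then obtain u1 c v1 where h: "u = u1 @ c" "v = winv c @ v1" "red (u @ v) = u1 @ v1"
    using reduced_Cons by blast
  have rr: "reduced (u1 @ v1)" using h(3) by (metis red_reduced)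
  show ?case
  proof (cases "u1 = []")
    case False
    then have "hd (u1 @ v1) \<noteq> linv x" using Cons.prems(1) h(1) by (auto simp: reduced_Cons)
    then have "red ((x # u) @ v) = (x # u1) @ v1" using h(3) False
      by (cases u1) (auto simp: red_Cons' push_def split: list.splits)
    then have X: "x # u = (x # u1) @ c \<and> v = winv c @ v1 \<and> red ((x # u) @ v) = (x # u1) @ v1" using h by simp
    show ?thesis by (rule exI, rule exI, rule exI, rule X)
  next
    case True
    show ?thesis
    proof (cases "v1 \<noteq> [] \<and> hd v1 = linv x")
      case T2: True
      then obtain v1' where v1: "v1 = linv x # v1'" by (cases v1) auto
      have "red ((x # u) @ v) = v1'" using h(3) True v1 by (simp add: red_Cons' push_def)
      then have X: "x # u = [] @ (x # c) \<and> v = winv (x # c) @ v1' \<and> red ((x # u) @ v) = [] @ v1'" using h True v1 by simp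
      show ?thesis by (rule exI, rule exI, rule exI, rule X)
    next
      case F2: False
      have "red ((x # u) @ v) = x # v1" using h(3) True F2
        by (cases v1) (auto simp: red_Cons' push_def)
      then have X: "x # u = [x] @ c \<and> v = winv c @ v1 \<and> red ((x # u) @ v) = [x] @ v1" using h True by simp
      show ?thesis by (rule exI, rule exI, rule exI, rule X)
    qed
  qed
qed

lemma length_red_app_ge: "reduced u \<Longrightarrow> reduced v \<Longrightarrow> length (red (u @ v)) + length u \<ge> length v"
  using cancel_struct by fastforce

lemma length_red_le: "length (red w) \<le> length w"
  by (induction w) (auto simp: red_Cons' intro: order_trans[OF length_push])

lemma red_drop_winv: "reduced w \<Longrightarrow> red (drop i w @ winv w) = winv (take i w)"
proof -
  assume r: "reduced w"
  have "winv w = winv (drop i w) @ winv (take i w)"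
    by (metis append_take_drop_id winv_append)
  then have "red (drop i w @ winv w) = red (winv (take i w))" by (simp add: red_cancel)
  then show ?thesis using r by (simp add: red_id reduced_take)
qed

lemma red_u_winv_beta:
  assumes "reduced y" "reduced b" "b \<noteq> []" "length y \<le> length b"
  shows "red (y @ winv b) = [] \<or> (red (y @ winv b) \<noteq> [] \<and> last (red (y @ winv b)) = linv (hd b))"
proof -
  obtain u1 c v1 where h: "y = u1 @ c" "winv b = winv c @ v1" "red (y @ winv b) = u1 @ v1"
    using cancel_struct[of y "winv b"] assms by auto
  have b: "b = winv v1 @ c" using h(2) by (metis winv_append winv_winv)
  show ?thesis
  proof (cases "v1 = []")
    case True
    then have "b = c" using b by simp
    then have "u1 = []" using assms(4) h(1) by simp
    then show ?thesis using h True by simp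
  next
    case False
    then show ?thesis using h b by (simp add: hd_winv last_winv)
  qed
qed

definition tr :: "'e word set \<Rightarrow> 'e word \<Rightarrow> 'e word set" where
  "tr A h = (\<lambda>b. red (b @ h)) ` A"

lemma theta_tr: "theta g \<xi> = tr \<xi> (winv g)"
  by (simp add: theta_def tr_def wmult_def)

lemma mem_tr: "(\<forall>b\<in>A. reduced b) \<Longrightarrow> y \<in> tr A h \<longleftrightarrow> reduced y \<and> red (y @ winv h) \<in> A"
proof
  assume A: "\<forall>b\<in>A. reduced b" and "y \<in> tr A h"
  then obtain b where b: "b \<in> A" "y = red (b @ h)" by (auto simp: tr_def)
  have "red (y @ winv h) = red (b @ h @ winv h)" using b by (simp add: red_append_red_left)
  also have "\<dots> = b" using A b by (simp add: red_cancel_right red_id)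
  finally show "reduced y \<and> red (y @ winv h) \<in> A" using b by simp
next
  assume A: "\<forall>b\<in>A. reduced b" and "reduced y \<and> red (y @ winv h) \<in> A"
  then have y: "reduced y" "red (y @ winv h) \<in> A" by auto
  have "red (red (y @ winv h) @ h) = red (y @ winv h @ h)" by (simp add: red_append_red_left)
  also have "\<dots> = y" using y by (simp add: red_cancel_right' red_id)
  finally show "y \<in> tr A h" using y(2) unfolding tr_def by (metis image_eqI)
qed

lemma tr_tr: "(\<forall>b\<in>A. reduced b) \<Longrightarrow> tr (tr A h) (winv h) = A"
proof -
  assume A: "\<forall>b\<in>A. reduced b"
  have "red (red (b @ h) @ winv h) = b" if "b \<in> A" for b
    using A that by (simp add: red_append_red_left red_cancel_right red_id)
  then show ?thesis unfolding tr_def image_image by simp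
qed

lemma tr_Un: "tr (A \<union> B) h = tr A h \<union> tr B h" by (simp add: tr_def image_Un)

lemma red_tr_mem: "b \<in> A \<Longrightarrow> red (b @ h) \<in> tr A h" by (simp add: tr_def)

locale fbg =
  fixes G :: "('v, 'e) sep_graph"
  assumes fb: "finite_bipartite G"
begin

lemma sep: "separated_graph G" using fb by (simp add: finite_bipartite_def)
lemma disj: "V00 G \<inter> V01 G = {}" using fb by (simp add: finite_bipartite_def)
lemma finE: "finite (Edges G)" using fb by (simp add: finite_bipartite_def)
lemma sr_V01: "e \<in> Edges G \<Longrightarrow> sr G e \<in> V01 G" using fb by (auto simp: finite_bipartite_def)
lemma rg_V00: "e \<in> Edges G \<Longrightarrow> rg G e \<in> V00 G" using fb by (auto simp: finite_bipartite_def)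
lemma not_V00_V01: "v \<in> V00 G \<Longrightarrow> v \<in> V01 G \<Longrightarrow> False" using disj by auto

lemma Cs_all: "\<forall>v \<in> Verts G.
        (\<forall>X \<in> Cs G v. X \<noteq> {}) \<and>
        \<Union>(Cs G v) = {e \<in> Edges G. rg G e = v} \<and>
        (\<forall>X \<in> Cs G v. \<forall>Y \<in> Cs G v. X \<noteq> Y \<longrightarrow> X \<inter> Y = {})"
  using sep unfolding separated_graph_def by (rule conjunct2[OF conjunct2])

lemma Cs_props:
  assumes "v \<in> V00 G"
  shows "\<And>X. X \<in> Cs G v \<Longrightarrow> X \<noteq> {}"
    and "\<Union>(Cs G v) = {e \<in> Edges G. rg G e = v}"
    and "\<And>X Y. X \<in> Cs G v \<Longrightarrow> Y \<in> Cs G v \<Longrightarrow> X \<noteq> Y \<Longrightarrow> X \<inter> Y = {}"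
proof -
  have "v \<in> Verts G" using assms by (simp add: Verts_def)
  then have h: "(\<forall>X \<in> Cs G v. X \<noteq> {}) \<and>
        \<Union>(Cs G v) = {e \<in> Edges G. rg G e = v} \<and>
        (\<forall>X \<in> Cs G v. \<forall>Y \<in> Cs G v. X \<noteq> Y \<longrightarrow> X \<inter> Y = {})" by (rule bspec[OF Cs_all])
  show "\<And>X. X \<in> Cs G v \<Longrightarrow> X \<noteq> {}" using h by simp
  show "\<Union>(Cs G v) = {e \<in> Edges G. rg G e = v}" using h by simp
  show "\<And>X Y. X \<in> Cs G v \<Longrightarrow> Y \<in> Cs G v \<Longrightarrow> X \<noteq> Y \<Longrightarrow> X \<inter> Y = {}" using h by simp
qed

lemma Cs_mem: "v \<in> V00 G \<Longrightarrow> X \<in> Cs G v \<Longrightarrow> e \<in> X \<Longrightarrow> e \<in> Edges G \<and> rg G e = v"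
proof -
  assume a: "v \<in> V00 G" "X \<in> Cs G v" "e \<in> X"
  then have "e \<in> \<Union>(Cs G v)" by blast
  then show ?thesis unfolding Cs_props(2)[OF a(1)] by simp
qed

lemma Xof_eq: "v \<in> V00 G \<Longrightarrow> X \<in> Cs G v \<Longrightarrow> e \<in> X \<Longrightarrow> Xof G e = X"
  unfolding Xof_def
proof (rule the_equality)
  assume a: "v \<in> V00 G" "X \<in> Cs G v" "e \<in> X"
  show "X \<in> Cs G (rg G e) \<and> e \<in> X" using a Cs_mem by simp
  fix Y assume "Y \<in> Cs G (rg G e) \<and> e \<in> Y"
  then show "Y = X" using a Cs_mem[OF a] Cs_props(3)[OF a(1)] by blast
qed

lemma Xof_mem: "e \<in> Edges G \<Longrightarrow> Xof G e \<in> Cs G (rg G e) \<and> e \<in> Xof G e"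
proof -
  assume e: "e \<in> Edges G"
  then have v: "rg G e \<in> V00 G" by (rule rg_V00)
  have "e \<in> \<Union>(Cs G (rg G e))" unfolding Cs_props(2)[OF v] using e by simp
  then obtain X where "X \<in> Cs G (rg G e)" "e \<in> X" by blast
  then show ?thesis using Xof_eq[OF v] by simp
qed

lemma finite_letters: "finite (letters G)" using finE by (simp add: letters_def)
lemma letters_iff: "x \<in> letters G \<longleftrightarrow> fst x \<in> Edges G" by (cases x) (auto simp: letters_def)
lemma linv_letters[simp]: "linv x \<in> letters G \<longleftrightarrow> x \<in> letters G" by (simp add: letters_iff)

lemma local_ok_letters: "local_ok G A \<Longrightarrow> A \<subseteq> letters G"
proof
  fix x assume A: "local_ok G A" and x: "x \<in> A"
  from A show "x \<in> letters G" unfolding local_ok_def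
  proof (elim disjE bexE exE conjE)
    fix v assume "A = {(e, True) |e. e \<in> Edges G \<and> sr G e = v}"
    then show ?thesis using x by (auto simp: letters_def)
  next
    fix v ch assume v: "v \<in> V00 G" and "\<forall>X\<in>Cs G v. ch X \<in> X" "A = (\<lambda>X. (ch X, False)) ` Cs G v"
    then show ?thesis using x Cs_mem[OF v] by (auto simp: letters_def)
  qed
qed

lemma adm_not_inv: "adm_pair G x y \<Longrightarrow> y \<noteq> linv x"
  by (auto simp: adm_pair_def linv_def)

lemma adm_sym: "adm_pair G x y = adm_pair G (linv y) (linv x)"
  by (auto simp: adm_pair_def lsrc_def ltgt_def linv_def)

definition ch0 :: "'e set \<Rightarrow> 'e" where "ch0 X = (SOME e. e \<in> X)"

definition good :: "'e letter \<Rightarrow> 'e letter \<Rightarrow> bool" where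
  "good x y \<longleftrightarrow> adm_pair G x y \<and> (\<not> snd x \<longrightarrow> fst x = ch0 (Xof G (fst x)))"

definition can :: "'e letter \<Rightarrow> 'e letter set" where
  "can y = insert (linv y) {x \<in> letters G. good x y}"

lemma ch0_mem: "X \<noteq> {} \<Longrightarrow> ch0 X \<in> X" by (simp add: ch0_def some_in_eq)

lemma local_V01:
  assumes "f \<in> Edges G" "v = sr G f"
  shows "local_ok G {(e, True) |e. e \<in> Edges G \<and> sr G e = v}"
  unfolding local_ok_def using sr_V01[OF assms(1)] assms(2) by (intro disjI1 bexI[of _ v]) auto

lemma local_V00:
  assumes "v \<in> V00 G" "\<forall>X\<in>Cs G v. ch X \<in> X"
  shows "local_ok G ((\<lambda>X. (ch X, False)) ` Cs G v)"
  unfolding local_ok_def using assms by (intro disjI2 bexI[of _ v] exI[of _ ch]) auto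

lemma can_ok: assumes y: "y \<in> letters G" shows "local_ok G (can y)"
proof (cases "snd y")
  case False
  obtain f where yf: "y = (f, False)" using False by (cases y) auto
  have f: "f \<in> Edges G" using y yf by (simp add: letters_iff)
  let ?v = "sr G f"
  have "can y = {(e, True) |e. e \<in> Edges G \<and> sr G e = ?v}"
  proof (intro equalityI subsetI)
    fix x assume "x \<in> can y"
    then consider "x = linv y" | "x \<in> letters G" "adm_pair G x y" by (auto simp: can_def good_def)
    then show "x \<in> {(e, True) |e. e \<in> Edges G \<and> sr G e = ?v}"
    proof cases
      case 1 then show ?thesis using yf f by (auto simp: linv_def)
    next
      case 2
      obtain e b where x: "x = (e, b)" by (cases x)
      have e: "e \<in> Edges G" using 2 x by (simp add: letters_iff)
      show ?thesis
      proof (cases b)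
        case True then show ?thesis using 2 x e yf by (auto simp: adm_pair_def lsrc_def ltgt_def)
      next
        case False
        then have "rg G e = sr G f" using 2 x yf by (auto simp: adm_pair_def lsrc_def ltgt_def)
        then show ?thesis using rg_V00[OF e] sr_V01[OF f] not_V00_V01 by auto
      qed
    qed
  next
    fix x assume "x \<in> {(e, True) |e. e \<in> Edges G \<and> sr G e = ?v}"
    then obtain e where x: "x = (e, True)" "e \<in> Edges G" "sr G e = ?v" by auto
    show "x \<in> can y"
    proof (cases "e = f")
      case True then show ?thesis using x yf by (simp add: can_def linv_def)
    next
      case False
      then have "good x y" using x yf by (auto simp: good_def adm_pair_def lsrc_def ltgt_def)
      then show ?thesis using x by (simp add: can_def letters_iff)
    qed
  qed
  then show ?thesis using local_V01[OF f refl] by simp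
next
  case True
  obtain f where yf: "y = (f, True)" using True by (cases y) auto
  have f: "f \<in> Edges G" using y yf by (simp add: letters_iff)
  let ?v = "rg G f"
  have v: "?v \<in> V00 G" using rg_V00[OF f] .
  define ch where "ch X = (if X = Xof G f then f else ch0 X)" for X
  have chm: "\<forall>X\<in>Cs G ?v. ch X \<in> X"
    using Xof_mem[OF f] Cs_props(1)[OF v] ch0_mem by (auto simp: ch_def)
  have "can y = (\<lambda>X. (ch X, False)) ` Cs G ?v"
  proof (intro equalityI subsetI)
    fix x assume "x \<in> can y"
    then consider "x = linv y" | "x \<in> letters G" "good x y" by (auto simp: can_def)
    then show "x \<in> (\<lambda>X. (ch X, False)) ` Cs G ?v"
    proof cases
      case 1 then show ?thesis using yf Xof_mem[OF f]
        by (auto simp: linv_def ch_def intro!: image_eqI[of _ _ "Xof G f"])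
    next
      case 2
      obtain e b where x: "x = (e, b)" by (cases x)
      have e: "e \<in> Edges G" using 2 x by (simp add: letters_iff)
      show ?thesis
      proof (cases b)
        case True
        then have "sr G e = rg G f" using 2 x yf by (auto simp: good_def adm_pair_def lsrc_def ltgt_def)
        then show ?thesis using sr_V01[OF e] v not_V00_V01 by auto
      next
        case False
        then have h: "rg G e = rg G f" "Xof G e \<noteq> Xof G f" "e = ch0 (Xof G e)"
          using 2 x yf by (auto simp: good_def adm_pair_def lsrc_def ltgt_def)
        have "Xof G e \<in> Cs G ?v" using Xof_mem[OF e] h(1) by simp
        moreover have "ch (Xof G e) = e" using h by (simp add: ch_def)
        ultimately show ?thesis using x False by (auto intro!: image_eqI[of _ _ "Xof G e"])
      qed
    qed
  next
    fix x assume "x \<in> (\<lambda>X. (ch X, False)) ` Cs G ?v"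
    then obtain X where X: "X \<in> Cs G ?v" "x = (ch X, False)" by auto
    show "x \<in> can y"
    proof (cases "X = Xof G f")
      case True then show ?thesis using X yf by (simp add: can_def linv_def ch_def)
    next
      case False
      have c: "ch X = ch0 X" using False by (simp add: ch_def)
      have cm: "ch0 X \<in> X" using chm X c by auto
      have ce: "ch0 X \<in> Edges G" "rg G (ch0 X) = ?v" using Cs_mem[OF v X(1) cm] by auto
      have xo: "Xof G (ch0 X) = X" using Xof_eq[OF v X(1) cm] .
      have "good x y" using X c ce xo False yf
        by (auto simp: good_def adm_pair_def lsrc_def ltgt_def)
      then show ?thesis using X c ce by (simp add: can_def letters_iff)
    qed
  qed
  then show ?thesis using local_V00[OF v chm] by simp
qed

lemma linv_can: "linv y \<in> can y" by (simp add: can_def)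

lemma sing_ok: "y \<in> letters G \<Longrightarrow> \<exists>A. local_ok G A \<and> linv y \<in> A"
  using can_ok linv_can by blast

lemma pair_ok:
  assumes x: "x \<in> letters G" and y: "y \<in> letters G" and a: "adm_pair G x y"
  shows "\<exists>A. local_ok G A \<and> linv y \<in> A \<and> x \<in> A"
proof (cases "snd y")
  case False
  obtain f where yf: "y = (f, False)" using False by (cases y) auto
  have f: "f \<in> Edges G" using y yf by (simp add: letters_iff)
  obtain e b where xe: "x = (e, b)" by (cases x)
  have e: "e \<in> Edges G" using x xe by (simp add: letters_iff)
  have b: b
  proof (rule ccontr)
    assume "\<not> b"
    then have "rg G e = sr G f" using a xe yf by (auto simp: adm_pair_def lsrc_def ltgt_def)
    then show False using rg_V00[OF e] sr_V01[OF f] not_V00_V01 by auto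
  qed
  have "sr G e = sr G f" using a xe yf b by (auto simp: adm_pair_def lsrc_def ltgt_def)
  then show ?thesis using local_V01[OF f refl] xe yf b e f by (intro exI[of _ "{(e, True) |e. e \<in> Edges G \<and> sr G e = sr G f}"]) (auto simp: linv_def)
next
  case True
  obtain f where yf: "y = (f, True)" using True by (cases y) auto
  have f: "f \<in> Edges G" using y yf by (simp add: letters_iff)
  obtain e b where xe: "x = (e, b)" by (cases x)
  have e: "e \<in> Edges G" using x xe by (simp add: letters_iff)
  let ?v = "rg G f"
  have v: "?v \<in> V00 G" using rg_V00[OF f] .
  have b: "\<not> b"
  proof
    assume b
    then have "sr G e = rg G f" using a xe yf by (auto simp: adm_pair_def lsrc_def ltgt_def)
    then show False using sr_V01[OF e] v not_V00_V01 by auto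
  qed
  have h: "rg G e = ?v" "Xof G e \<noteq> Xof G f" using a xe yf b by (auto simp: adm_pair_def lsrc_def ltgt_def)
  define ch where "ch X = (if X = Xof G f then f else if X = Xof G e then e else ch0 X)" for X
  have chm: "\<forall>X\<in>Cs G ?v. ch X \<in> X"
    using Xof_mem[OF f] Xof_mem[OF e] Cs_props(1)[OF v] ch0_mem by (auto simp: ch_def)
  have "linv y = (ch (Xof G f), False)" using yf by (simp add: ch_def linv_def)
  moreover have "x = (ch (Xof G e), False)" using xe b h by (simp add: ch_def)
  moreover have "Xof G f \<in> Cs G ?v" "Xof G e \<in> Cs G ?v" using Xof_mem[OF f] Xof_mem[OF e] h by auto
  ultimately show ?thesis using local_V00[OF v chm] by blast
qed

lemma local_adm:
  assumes A: "local_ok G A" and x: "x \<in> A" and y: "linv y \<in> A" and ne: "x \<noteq> linv y"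
  shows "adm_pair G x y"
  using A unfolding local_ok_def
proof (elim disjE bexE exE conjE)
  fix v assume v: "v \<in> V01 G" and Aeq: "A = {(e, True) |e. e \<in> Edges G \<and> sr G e = v}"
  obtain e where xe: "x = (e, True)" "e \<in> Edges G" "sr G e = v" using x Aeq by auto
  obtain f where yf: "linv y = (f, True)" "f \<in> Edges G" "sr G f = v" using y Aeq by auto
  have y2: "y = (f, False)" using yf(1) by (metis linv_linv linv_def fst_conv snd_conv)
  show ?thesis using xe yf y2 ne by (auto simp: adm_pair_def lsrc_def ltgt_def linv_def)
next
  fix v ch assume v: "v \<in> V00 G" and chm: "\<forall>X\<in>Cs G v. ch X \<in> X"
    and Aeq: "A = (\<lambda>X. (ch X, False)) ` Cs G v"
  obtain X where X: "X \<in> Cs G v" "x = (ch X, False)" using x Aeq by auto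
  obtain Y where Y: "Y \<in> Cs G v" "linv y = (ch Y, False)" using y Aeq by auto
  have y2: "y = (ch Y, True)" using Y(2) by (metis linv_linv linv_def fst_conv snd_conv)
  have XY: "X \<noteq> Y" using X Y ne by auto
  have cx: "rg G (ch X) = v" "Xof G (ch X) = X" using Cs_mem[OF v X(1)] Xof_eq[OF v X(1)] chm X(1) by auto
  have cy: "rg G (ch Y) = v" "Xof G (ch Y) = Y" using Cs_mem[OF v Y(1)] Xof_eq[OF v Y(1)] chm Y(1) by auto
  show ?thesis using X(2) y2 cx cy XY by (auto simp: adm_pair_def lsrc_def ltgt_def)
qed

lemma dead_end:
  assumes A: "local_ok G {x0}" and a: "adm_pair G x0 y" and y: "y \<in> letters G"
  shows False
  using A unfolding local_ok_def
proof (elim disjE bexE exE conjE)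
  fix v assume v: "v \<in> V01 G" and Aeq: "{x0} = {(e, True) |e. e \<in> Edges G \<and> sr G e = v}"
  obtain e where xe: "x0 = (e, True)" "e \<in> Edges G" "sr G e = v" using Aeq by auto
  obtain f b where yf: "y = (f, b)" by (cases y)
  have f: "f \<in> Edges G" using y yf by (simp add: letters_iff)
  have lt: "ltgt G y = v" using a xe by (simp add: adm_pair_def lsrc_def)
  show False
  proof (cases b)
    case True
    then have "rg G f = v" using lt yf by (simp add: ltgt_def)
    then show False using rg_V00[OF f] v not_V00_V01 by auto
  next
    case False
    then have "sr G f = v" using lt yf by (simp add: ltgt_def)
    then have "(f, True) \<in> {x0}" using Aeq f by auto
    then have "f = e" using xe by simp
    then show False using a xe yf False by (simp add: adm_pair_def)
  qed
next
  fix v ch assume v: "v \<in> V00 G" and chm: "\<forall>X\<in>Cs G v. ch X \<in> X"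
    and Aeq: "{x0} = (\<lambda>X. (ch X, False)) ` Cs G v"
  obtain X where X: "X \<in> Cs G v" "x0 = (ch X, False)" using Aeq by auto
  have cx: "rg G (ch X) = v" "Xof G (ch X) = X" "ch X \<in> Edges G"
    using Cs_mem[OF v X(1)] Xof_eq[OF v X(1)] chm X(1) by auto
  obtain f b where yf: "y = (f, b)" by (cases y)
  have f: "f \<in> Edges G" using y yf by (simp add: letters_iff)
  have lt: "ltgt G y = v" using a X cx by (simp add: adm_pair_def lsrc_def)
  show False
  proof (cases b)
    case False
    then have "sr G f = v" using lt yf by (simp add: ltgt_def)
    then show False using sr_V01[OF f] v not_V00_V01 by auto
  next
    case True
    then have rf: "rg G f = v" using lt yf by (simp add: ltgt_def)
    have Y: "Xof G f \<in> Cs G v" "f \<in> Xof G f" using Xof_mem[OF f] rf by auto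
    have "(ch (Xof G f), False) \<in> {x0}" using Aeq Y by auto
    then have "ch (Xof G f) = ch X" using X by simp
    then have "Xof G f = X" using chm Y X Cs_props(3)[OF v] by (metis disjoint_iff)
    then show False using a X yf True cx by (simp add: adm_pair_def)
  qed
qed

end

context fbg begin

lemma FG_iff: "w \<in> FG G \<longleftrightarrow> set w \<subseteq> letters G \<and> reduced w" by (simp add: FG_def)

lemma wmult_single: "reduced y \<Longrightarrow> wmult [x] y = push x y"
  unfolding wmult_def by (rule red_single_app)

lemma red_Cons_red: "red (x # red ys) = red (x # ys)"
  by (simp add: red_Cons' red_id)

lemma Om_FG: "\<xi> \<in> Omega G \<Longrightarrow> \<xi> \<subseteq> FG G" by (simp add: Omega_def)
lemma Om_Nil: "\<xi> \<in> Omega G \<Longrightarrow> [] \<in> \<xi>" by (simp add: Omega_def)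
lemma Om_drop: "\<xi> \<in> Omega G \<Longrightarrow> w \<in> \<xi> \<Longrightarrow> drop k w \<in> \<xi>" by (simp add: Omega_def)
lemma Om_local: "\<xi> \<in> Omega G \<Longrightarrow> w \<in> \<xi> \<Longrightarrow> local_ok G (xi_at G \<xi> w)" by (simp add: Omega_def)
lemma Om_red: "\<xi> \<in> Omega G \<Longrightarrow> w \<in> \<xi> \<Longrightarrow> reduced w" by (metis FG_iff Om_FG subsetD)
lemma Om_letters: "\<xi> \<in> Omega G \<Longrightarrow> w \<in> \<xi> \<Longrightarrow> set w \<subseteq> letters G" by (metis FG_iff Om_FG subsetD)

lemma xi_at_iff: "\<sigma> \<in> xi_at G A y \<longleftrightarrow> \<sigma> \<in> letters G \<and> wmult [\<sigma>] y \<in> A"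
  by (simp add: xi_at_def)

lemma xi_at_mono: "A \<subseteq> B \<Longrightarrow> xi_at G A y \<subseteq> xi_at G B y" by (auto simp: xi_at_def)
lemma xi_at_Un: "xi_at G (A \<union> B) y = xi_at G A y \<union> xi_at G B y" by (auto simp: xi_at_def)

lemma push_back: "reduced y \<Longrightarrow> y \<noteq> [] \<Longrightarrow> push (linv (hd y)) y = tl y"
  by (cases y) (auto simp: push_def)

lemma xi_back: assumes "\<xi> \<in> Omega G" "y \<in> \<xi>" "y \<noteq> []" shows "linv (hd y) \<in> xi_at G \<xi> y"
proof -
  have r: "reduced y" using Om_red assms by blast
  have "wmult [linv (hd y)] y = drop 1 y" using r assms(3) by (simp add: wmult_single push_back drop_Suc)
  moreover have "hd y \<in> letters G" using Om_letters[OF assms(1,2)] assms(3) by auto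
  ultimately show ?thesis using Om_drop[OF assms(1,2)] by (simp add: xi_at_iff)
qed

lemma xi_cons: assumes "\<xi> \<in> Omega G" "x # y \<in> \<xi>" shows "x \<in> xi_at G \<xi> y"
proof -
  have r: "reduced (x # y)" using Om_red assms by blast
  then have "wmult [x] y = x # y" by (simp add: wmult_single push_reduced_Cons reduced_Cons)
  moreover have "x \<in> letters G" using Om_letters[OF assms] by auto
  ultimately show ?thesis using assms by (simp add: xi_at_iff)
qed

lemma drop_Suc_nth: "i < length w \<Longrightarrow> drop i w = w ! i # drop (Suc i) w"
  by (simp add: Cons_nth_drop_Suc)

lemma Om_admissible:
  assumes xi: "\<xi> \<in> Omega G" and w: "w \<in> \<xi>" "w \<noteq> []"
  shows "admissible G w"
  unfolding admissible_def
proof (intro conjI allI impI)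
  show "w \<noteq> []" by fact
  show "set w \<subseteq> letters G" using Om_letters[OF xi w(1)] .
  fix i assume i: "Suc i < length w"
  let ?z = "drop (Suc i) w"
  have z: "?z \<in> \<xi>" "?z \<noteq> []" "hd ?z = w ! Suc i" using Om_drop[OF xi w(1)] i by (auto simp: hd_drop_conv_nth)
  have "drop i w = w ! i # ?z" using i by (simp add: drop_Suc_nth)
  then have x: "w ! i \<in> xi_at G \<xi> ?z" using xi_cons[OF xi] Om_drop[OF xi w(1), of i] by metis
  have y: "linv (w ! Suc i) \<in> xi_at G \<xi> ?z" using xi_back[OF xi z(1,2)] z(3) by simp
  have "reduced w" using Om_red xi w by blast
  then have "w ! Suc i \<noteq> linv (w ! i)" using i by (simp add: reduced_def)
  then have "w ! i \<noteq> linv (w ! Suc i)" by (metis linv_linv)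
  then show "adm_pair G (w ! i) (w ! Suc i)" using local_adm[OF Om_local[OF xi z(1)] x y] by simp
qed

lemma tr_FG: "A \<subseteq> FG G \<Longrightarrow> h \<in> FG G \<Longrightarrow> tr A h \<subseteq> FG G"
proof
  fix w assume A: "A \<subseteq> FG G" and h: "h \<in> FG G" and "w \<in> tr A h"
  then obtain b where b: "b \<in> A" "w = red (b @ h)" by (auto simp: tr_def)
  have "b \<in> FG G" using A b by blast
  then have "set (b @ h) \<subseteq> letters G" using h by (auto simp: FG_iff)
  then show "w \<in> FG G" using b set_red[of "b @ h"] by (auto simp: FG_iff)
qed

lemma FG_reduced: "A \<subseteq> FG G \<Longrightarrow> \<forall>b\<in>A. reduced b" by (auto simp: FG_iff)

lemma xi_at_tr:
  assumes A: "\<forall>b\<in>A. reduced b"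
  shows "xi_at G (tr A h) (red (y @ h)) = xi_at G A y"
proof -
  have "wmult [\<sigma>] (red (y @ h)) \<in> tr A h \<longleftrightarrow> wmult [\<sigma>] y \<in> A" for \<sigma>
  proof -
    have e1: "wmult [\<sigma>] (red (y @ h)) = red (\<sigma> # y @ h)" by (simp add: wmult_def red_Cons_red)
    have "red (red (\<sigma> # y @ h) @ winv h) = red ((\<sigma> # y) @ h @ winv h)" by (simp add: red_append_red_left)
    also have "\<dots> = wmult [\<sigma>] y" by (simp only: red_cancel_right wmult_def) simp
    finally show ?thesis using mem_tr[OF A] e1 by simp
  qed
  then show ?thesis by (simp add: xi_at_def)
qed

lemma red_mid_cancel: "red (a @ c @ winv c @ v) = red (a @ v)"
  by (metis red_append_red_right red_cancel)

lemma suffix_red: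
  assumes "reduced y" "reduced h"
  shows "(\<exists>j. drop k (red (y @ h)) = red (drop j y @ h)) \<or> (\<exists>j. drop k (red (y @ h)) = drop j h)"
proof -
  obtain u1 c v1 where h: "y = u1 @ c" "h = winv c @ v1" "red (y @ h) = u1 @ v1"
    using cancel_struct[OF assms] by blast
  have r: "reduced (u1 @ v1)" using h(3) by (metis red_reduced)
  show ?thesis
  proof (cases "k \<le> length u1")
    case True
    have "drop k (red (y @ h)) = drop k u1 @ v1" using h(3) True by simp
    moreover have "red (drop k y @ h) = red (drop k u1 @ v1)" using h True by (simp add: red_mid_cancel)
    moreover have "reduced (drop k u1 @ v1)" using reduced_drop[OF r, of k] True by simp
    ultimately show ?thesis by (metis red_id)
  next
    case False
    then have "drop k (red (y @ h)) = drop (k - length u1 + length c) h" using h by simp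
    then show ?thesis by blast
  qed
qed

lemma tr_Omega:
  assumes xi: "\<xi> \<in> Omega G" and h: "h \<in> FG G" and hin: "winv h \<in> \<xi>"
  shows "tr \<xi> h \<in> Omega G"
proof -
  have A: "\<forall>b\<in>\<xi>. reduced b" using FG_reduced[OF Om_FG[OF xi]] .
  have hr: "reduced h" using h by (simp add: FG_iff)
  have "tr \<xi> h \<subseteq> FG G" using tr_FG[OF Om_FG[OF xi] h] .
  moreover have "[] \<in> tr \<xi> h"
  proof -
    have "red (winv h @ h) = []" using red_cancel'[of h "[]"] by simp
    then show ?thesis using hin by (metis red_tr_mem)
  qed
  moreover have "\<forall>w\<in>tr \<xi> h. \<forall>k. drop k w \<in> tr \<xi> h"
  proof (intro ballI allI)
    fix w k assume "w \<in> tr \<xi> h"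
    then obtain b where b: "b \<in> \<xi>" "w = red (b @ h)" by (auto simp: tr_def)
    from suffix_red[OF A[rule_format, OF b(1)] hr, of k]
    show "drop k w \<in> tr \<xi> h"
    proof (elim disjE exE)
      fix j assume "drop k (red (b @ h)) = red (drop j b @ h)"
      then show ?thesis using b Om_drop[OF xi b(1)] by (metis red_tr_mem)
    next
      fix j assume dj: "drop k (red (b @ h)) = drop j h"
      have "winv h = winv (drop j h) @ winv (take j h)" by (metis append_take_drop_id winv_append)
      then have "winv (take j h) = drop (length h - j) (winv h)" by (metis append_eq_conv_conj length_drop length_winv)
      then have "winv (take j h) \<in> \<xi>" using Om_drop[OF xi hin] by simp
      moreover have "red (drop j h @ winv h) = winv (take j h)" using red_drop_winv[OF hr] .
      moreover have "reduced (drop j h)" using reduced_drop[OF hr] .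
      ultimately have "drop j h \<in> tr \<xi> h" using mem_tr[OF A] by simp
      then show ?thesis using dj b by simp
    qed
  qed
  moreover have "\<forall>\<alpha>\<in>tr \<xi> h. local_ok G (xi_at G (tr \<xi> h) \<alpha>)"
  proof
    fix w assume "w \<in> tr \<xi> h"
    then obtain b where b: "b \<in> \<xi>" "w = red (b @ h)" by (auto simp: tr_def)
    show "local_ok G (xi_at G (tr \<xi> h) w)" using b xi_at_tr[OF A] Om_local[OF xi b(1)] by simp
  qed
  ultimately show ?thesis by (simp add: Omega_def)
qed

lemma ball_eq:
  assumes zeta: "\<zeta> \<in> Omega G" and xi: "\<xi> \<in> Omega G"
    and sub: "ball_n n \<xi> \<subseteq> \<zeta>"
    and loc: "\<And>y. y \<in> ball_n n \<xi> \<Longrightarrow> length y < n \<Longrightarrow> xi_at G \<zeta> y = xi_at G \<xi> y"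
  shows "ball_n n \<zeta> = ball_n n \<xi>"
proof
  show "ball_n n \<xi> \<subseteq> ball_n n \<zeta>" using sub by (auto simp: ball_n_def)
  have "y \<in> \<zeta> \<Longrightarrow> length y \<le> n \<Longrightarrow> y \<in> \<xi>" for y
  proof (induction y)
    case Nil then show ?case using Om_Nil[OF xi] by simp
  next
    case (Cons x y)
    have yz: "y \<in> \<zeta>" using Om_drop[OF zeta Cons.prems(1), of 1] by simp
    then have yx: "y \<in> \<xi>" using Cons by simp
    have "x \<in> xi_at G \<zeta> y" using xi_cons[OF zeta Cons.prems(1)] .
    also have "\<dots> = xi_at G \<xi> y" using loc[of y] yx Cons.prems(2) by (simp add: ball_n_def)
    finally have "wmult [x] y \<in> \<xi>" by (simp add: xi_at_iff)
    moreover have "reduced (x # y)" using Om_red[OF zeta Cons.prems(1)] .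
    ultimately show ?case by (metis wmult_single push_reduced_Cons reduced_Cons)
  qed
  then show "ball_n n \<zeta> \<subseteq> ball_n n \<xi>" by (auto simp: ball_n_def)
qed

end

context fbg begin

definition chain :: "'e word \<Rightarrow> bool" where
  "chain \<gamma> \<longleftrightarrow> (\<forall>i. Suc i < length \<gamma> \<longrightarrow> good (\<gamma> ! i) (\<gamma> ! Suc i))"

lemma chain_Cons: "chain (x # \<gamma>) \<longleftrightarrow> chain \<gamma> \<and> (\<gamma> \<noteq> [] \<longrightarrow> good x (hd \<gamma>))"
  unfolding chain_def
  apply (cases \<gamma>)
   apply simp
  apply (auto simp: nth_Cons split: nat.splits)
  done

lemma chain_single: "chain [x]" by (simp add: chain_def)

lemma chain_drop: "chain \<gamma> \<Longrightarrow> chain (drop k \<gamma>)"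
  unfolding chain_def
proof (intro allI impI)
  fix i assume c: "\<forall>i. Suc i < length \<gamma> \<longrightarrow> good (\<gamma> ! i) (\<gamma> ! Suc i)" and i: "Suc i < length (drop k \<gamma>)"
  then have "Suc (k + i) < length \<gamma>" by simp
  then have "good (\<gamma> ! (k + i)) (\<gamma> ! Suc (k + i))" using c by blast
  then show "good (drop k \<gamma> ! i) (drop k \<gamma> ! Suc i)" using i by simp
qed

lemma good_not_inv: "good x y \<Longrightarrow> y \<noteq> linv x"
  using adm_not_inv by (simp add: good_def)

lemma chain_reduced: "chain \<gamma> \<Longrightarrow> reduced \<gamma>"
  unfolding chain_def reduced_def
proof (intro allI impI)
  fix i assume "\<forall>i. Suc i < length \<gamma> \<longrightarrow> good (\<gamma> ! i) (\<gamma> ! Suc i)" "Suc i < length \<gamma>"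
  then have "good (\<gamma> ! i) (\<gamma> ! Suc i)" by blast
  then show "\<gamma> ! Suc i \<noteq> linv (\<gamma> ! i)" by (rule good_not_inv)
qed

lemma drop_last_single: "\<gamma> \<noteq> [] \<Longrightarrow> drop (length \<gamma> - 1) \<gamma> = [last \<gamma>]"
proof -
  assume "\<gamma> \<noteq> []"
  then have "\<gamma> = butlast \<gamma> @ [last \<gamma>]" by simp
  then show ?thesis by (metis append_eq_conv_conj length_butlast)
qed

lemma suffix_drop: "w = u @ v \<Longrightarrow> v = drop (length w - length v) w" by simp

lemma extension:
  assumes S: "S \<subseteq> FG G" "[] \<in> S" "\<forall>w\<in>S. \<forall>k. drop k w \<in> S"
    and loc: "\<forall>\<alpha>\<in>S. \<exists>A. local_ok G A \<and> xi_at G S \<alpha> \<subseteq> A"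
  shows "\<exists>\<xi>\<in>Omega G. S \<subseteq> \<xi> \<and> (\<forall>\<alpha>\<in>S. local_ok G (xi_at G S \<alpha>) \<longrightarrow> xi_at G \<xi> \<alpha> = xi_at G S \<alpha>)"
proof -
  define Af where "Af \<alpha> = (if local_ok G (xi_at G S \<alpha>) then xi_at G S \<alpha>
                           else (SOME A. local_ok G A \<and> xi_at G S \<alpha> \<subseteq> A))" for \<alpha>
  have Af: "local_ok G (Af \<alpha>) \<and> xi_at G S \<alpha> \<subseteq> Af \<alpha>" if "\<alpha> \<in> S" for \<alpha>
  proof (cases "local_ok G (xi_at G S \<alpha>)")
    case True then show ?thesis by (simp add: Af_def)
  next
    case False
    have "\<exists>A. local_ok G A \<and> xi_at G S \<alpha> \<subseteq> A" using loc that by blast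
    from someI_ex[OF this] show ?thesis using False by (simp add: Af_def)
  qed
  have Sred: "reduced w" "set w \<subseteq> letters G" if "w \<in> S" for w using subsetD[OF S(1) that] by (auto simp: FG_iff)
  have bck: "linv (hd \<alpha>) \<in> xi_at G S \<alpha>" if "\<alpha> \<in> S" "\<alpha> \<noteq> []" for \<alpha>
  proof -
    have "wmult [linv (hd \<alpha>)] \<alpha> = drop 1 \<alpha>" using Sred[OF that(1)] that(2) by (simp add: wmult_single push_back drop_Suc)
    moreover have "hd \<alpha> \<in> letters G" using Sred(2)[OF that(1)] that(2) by auto
    ultimately show ?thesis using S(3) that(1) by (simp add: xi_at_iff)
  qed
  define rep where "rep \<gamma> \<alpha> \<longleftrightarrow> \<alpha> \<in> S \<and> \<gamma> \<noteq> [] \<and> set \<gamma> \<subseteq> letters G \<and> chain \<gamma> \<and>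
      last \<gamma> \<in> Af \<alpha> \<and> last \<gamma> \<notin> xi_at G S \<alpha>" for \<gamma> \<alpha>
  have K1: "reduced (\<gamma> @ \<alpha>)" if "rep \<gamma> \<alpha>" for \<gamma> \<alpha>
  proof -
    have "reduced \<gamma>" using that chain_reduced by (simp add: rep_def)
    moreover have "reduced \<alpha>" using that Sred by (simp add: rep_def)
    moreover have "hd \<alpha> \<noteq> linv (last \<gamma>)" if "\<alpha> \<noteq> []"
      using bck[of \<alpha>] \<open>rep \<gamma> \<alpha>\<close> that by (auto simp: rep_def)
    ultimately show ?thesis by (auto simp: reduced_append)
  qed
  have K2: False if r: "rep \<gamma> \<alpha>" and w: "w \<in> S" "w = drop k (\<gamma> @ \<alpha>)" "length \<alpha> < length w" for \<gamma> \<alpha> w k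
  proof -
    have k: "k < length \<gamma>" using w by simp
    have g: "\<gamma> \<noteq> []" using r by (simp add: rep_def)
    have "drop (length \<gamma> - 1 - k) w = drop (length \<gamma> - 1) (\<gamma> @ \<alpha>)" using w k by (simp add: drop_drop)
    also have "\<dots> = [last \<gamma>] @ \<alpha>" using drop_last_single[OF g] by simp
    finally have in1: "last \<gamma> # \<alpha> \<in> S" using S(3) w(1) by (metis append_Cons append_Nil)
    have "reduced (last \<gamma> # \<alpha>)" using reduced_drop[OF K1[OF r], of "length \<gamma> - 1"] drop_last_single[OF g] by simp
    then have "wmult [last \<gamma>] \<alpha> = last \<gamma> # \<alpha>" by (metis wmult_single push_reduced_Cons reduced_Cons)
    moreover have "last \<gamma> \<in> letters G" using r g by (auto simp: rep_def)
    ultimately have "last \<gamma> \<in> xi_at G S \<alpha>" using in1 by (simp add: xi_at_iff)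
    then show False using r by (simp add: rep_def)
  qed
  have K4: "\<gamma> @ \<alpha> \<notin> S" if "rep \<gamma> \<alpha>" for \<gamma> \<alpha>
    using K2[OF that, of "\<gamma> @ \<alpha>" 0] that by (auto simp: rep_def)
  define N where "N = {\<gamma> @ \<alpha> | \<gamma> \<alpha>. rep \<gamma> \<alpha>}"
  define \<xi> where "\<xi> = S \<union> N"
  have xiFG: "\<xi> \<subseteq> FG G"
  proof
    fix w assume "w \<in> \<xi>"
    then consider "w \<in> S" | \<gamma> \<alpha> where "rep \<gamma> \<alpha>" "w = \<gamma> @ \<alpha>" by (auto simp: \<xi>_def N_def)
    then show "w \<in> FG G"
    proof cases
      case 1 then show ?thesis using S(1) by blast
    next
      case 2 then show ?thesis using K1[OF 2(1)] Sred(2)[of \<alpha>] by (auto simp: FG_iff rep_def)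
    qed
  qed
  have xidrop: "drop k w \<in> \<xi>" if "w \<in> \<xi>" for w k
  proof -
    from that consider "w \<in> S" | \<gamma> \<alpha> where "rep \<gamma> \<alpha>" "w = \<gamma> @ \<alpha>" by (auto simp: \<xi>_def N_def)
    then show ?thesis
    proof cases
      case 1 then show ?thesis using S(3) by (simp add: \<xi>_def)
    next
      case 2
      show ?thesis
      proof (cases "k < length \<gamma>")
        case True
        have "rep (drop k \<gamma>) \<alpha>" using 2(1) True chain_drop
          by (auto simp: rep_def last_drop dest: in_set_dropD)
        then show ?thesis using 2(2) True by (auto simp: \<xi>_def N_def)
      next
        case False
        then show ?thesis using 2 S(3) by (auto simp: \<xi>_def rep_def)
      qed
    qed
  qed
  have locS: "xi_at G \<xi> \<alpha> = Af \<alpha>" if a: "\<alpha> \<in> S" for \<alpha>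
  proof (intro equalityI subsetI)
    fix \<sigma> assume "\<sigma> \<in> Af \<alpha>"
    then have sl: "\<sigma> \<in> letters G" using Af[OF a] local_ok_letters by blast
    show "\<sigma> \<in> xi_at G \<xi> \<alpha>"
    proof (cases "\<sigma> \<in> xi_at G S \<alpha>")
      case True then show ?thesis by (simp add: xi_at_iff \<xi>_def)
    next
      case False
      then have ne: "\<alpha> = [] \<or> \<sigma> \<noteq> linv (hd \<alpha>)" using bck[OF a] by auto
      have "push \<sigma> \<alpha> = \<sigma> # \<alpha>" using push_cases[OF Sred(1)[OF a], of \<sigma>] ne by auto
      then have "wmult [\<sigma>] \<alpha> = [\<sigma>] @ \<alpha>" using Sred(1)[OF a] by (simp add: wmult_single)
      moreover have "rep [\<sigma>] \<alpha>" using a sl False \<open>\<sigma> \<in> Af \<alpha>\<close> chain_single by (simp add: rep_def)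
      ultimately show ?thesis using sl unfolding xi_at_iff \<xi>_def N_def by blast
    qed
  next
    fix \<sigma> assume "\<sigma> \<in> xi_at G \<xi> \<alpha>"
    then have sl: "\<sigma> \<in> letters G" and w: "wmult [\<sigma>] \<alpha> \<in> \<xi>" by (auto simp: xi_at_iff)
    show "\<sigma> \<in> Af \<alpha>"
    proof (cases "wmult [\<sigma>] \<alpha> \<in> S")
      case True then show ?thesis using Af[OF a] sl by (auto simp: xi_at_iff)
    next
      case False
      then have "wmult [\<sigma>] \<alpha> \<in> N" using w by (simp add: \<xi>_def)
      then obtain \<gamma>' \<alpha>' where r: "rep \<gamma>' \<alpha>'" "wmult [\<sigma>] \<alpha> = \<gamma>' @ \<alpha>'" unfolding N_def by blast
      have t: "tl \<alpha> \<in> S" using S(3) a by (metis drop_0 drop_Suc One_nat_def)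
      have "push \<sigma> \<alpha> \<noteq> tl \<alpha>" using False t Sred(1)[OF a] by (auto simp: wmult_single)
      then have p: "push \<sigma> \<alpha> = \<sigma> # \<alpha>" using push_cases[OF Sred(1)[OF a], of \<sigma>] by auto
      then have e: "[\<sigma>] @ \<alpha> = \<gamma>' @ \<alpha>'" using r(2) Sred(1)[OF a] by (simp add: wmult_single)
      have "\<not> length \<alpha>' < length \<alpha>"
      proof
        assume l: "length \<alpha>' < length \<alpha>"
        have h1: "drop 1 ([\<sigma>] @ \<alpha>) = \<alpha>" by simp
        have d: "\<alpha> = drop 1 (\<gamma>' @ \<alpha>')" using e h1 by metis
        show False by (rule K2[OF r(1) a d l])
      qed
      moreover have "length \<alpha>' \<noteq> Suc (length \<alpha>)"
      proof
        assume "length \<alpha>' = Suc (length \<alpha>)"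
        then have "length \<gamma>' = 0" using arg_cong[OF e, of length] by simp
        then show False using r(1) by (simp add: rep_def)
      qed
      moreover have "length \<alpha>' \<le> Suc (length \<alpha>)" using arg_cong[OF e, of length] by simp
      ultimately have "length \<alpha>' = length \<alpha>" by simp
      then have "[\<sigma>] = \<gamma>' \<and> \<alpha> = \<alpha>'" using e append_eq_append_conv by metis
      then show ?thesis using r(1) unfolding rep_def by force
    qed
  qed
  have locN: "xi_at G \<xi> (\<gamma> @ \<alpha>) = can (hd \<gamma>)" if r: "rep \<gamma> \<alpha>" for \<gamma> \<alpha>
  proof -
    let ?z = "\<gamma> @ \<alpha>"
    have zr: "reduced ?z" using K1[OF r] .
    have g: "\<gamma> \<noteq> []" "set \<gamma> \<subseteq> letters G" "chain \<gamma>" "\<alpha> \<in> S" using r by (auto simp: rep_def)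
    have hdz: "hd ?z = hd \<gamma>" using g by simp
    have hl: "hd \<gamma> \<in> letters G" using g by auto
    show ?thesis
    proof (intro equalityI subsetI)
      fix \<sigma> assume "\<sigma> \<in> xi_at G \<xi> ?z"
      then have sl: "\<sigma> \<in> letters G" and w: "push \<sigma> ?z \<in> \<xi>" using zr by (auto simp: xi_at_iff wmult_single)
      show "\<sigma> \<in> can (hd \<gamma>)"
      proof (cases "\<sigma> = linv (hd ?z)")
        case True then show ?thesis using hdz by (simp add: linv_can)
      next
        case False
        then have p: "push \<sigma> ?z = \<sigma> # ?z" using push_cases[OF zr, of \<sigma>] by auto
        have nS: "\<sigma> # ?z \<notin> S"
        proof
          assume "\<sigma> # ?z \<in> S"
          then have "drop 1 (\<sigma> # ?z) \<in> S" using S(3) by blast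
          then show False using K4[OF r] by simp
        qed
        have "\<sigma> # ?z \<in> N" using w p nS by (simp add: \<xi>_def)
        then obtain \<gamma>' \<alpha>' where r': "rep \<gamma>' \<alpha>'" "\<sigma> # ?z = \<gamma>' @ \<alpha>'" unfolding N_def by blast
        have "\<not> length \<alpha>' < length \<alpha>"
        proof
          assume l: "length \<alpha>' < length \<alpha>"
          have d: "\<alpha> = drop (length (\<gamma>' @ \<alpha>') - length \<alpha>) (\<gamma>' @ \<alpha>')"
            using r'(2) suffix_drop by (metis append_Cons)
          show False by (rule K2[OF r'(1) g(4) d l])
        qed
        moreover have "\<not> length \<alpha> < length \<alpha>'"
        proof
          assume l: "length \<alpha> < length \<alpha>'"
          have "length \<alpha>' \<noteq> Suc (length ?z)"
          proof
            assume "length \<alpha>' = Suc (length ?z)"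
            then have "length \<gamma>' = 0" using arg_cong[OF r'(2), of length] by simp
            then show False using r'(1) by (simp add: rep_def)
          qed
          moreover have "length \<alpha>' \<le> Suc (length ?z)" using arg_cong[OF r'(2), of length] by simp
          ultimately have l2: "length \<alpha>' \<le> length ?z" by simp
          have "\<alpha>' = drop (Suc (length ?z) - length \<alpha>') (\<sigma> # ?z)" using r'(2) suffix_drop by (metis length_Cons)
          then have d: "\<alpha>' = drop (length ?z - length \<alpha>') ?z" using l2 by (simp add: Suc_diff_le)
          have a': "\<alpha>' \<in> S" using r'(1) by (simp add: rep_def)
          show False by (rule K2[OF r a' d l])
        qed
        ultimately have "length \<alpha>' = length \<alpha>" by simp
        then have "(\<sigma> # \<gamma>) = \<gamma>' \<and> \<alpha> = \<alpha>'" using r'(2) append_eq_append_conv append_Cons by metis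
        then have "\<gamma>' = \<sigma> # \<gamma>" by simp
        then have "good \<sigma> (hd \<gamma>)" using r'(1) g(1) by (simp add: rep_def chain_Cons)
        then show ?thesis using sl by (simp add: can_def)
      qed
    next
      fix \<sigma> assume s: "\<sigma> \<in> can (hd \<gamma>)"
      then consider "\<sigma> = linv (hd \<gamma>)" | "\<sigma> \<in> letters G" "good \<sigma> (hd \<gamma>)" by (auto simp: can_def)
      then show "\<sigma> \<in> xi_at G \<xi> ?z"
      proof cases
        case 1
        have "push \<sigma> ?z = tl \<gamma> @ \<alpha>" using push_back[OF zr] 1 g(1) by simp
        moreover have "tl \<gamma> @ \<alpha> \<in> \<xi>"
        proof -
          have "?z \<in> \<xi>" using r unfolding \<xi>_def N_def by blast
          from xidrop[OF this, of 1] show ?thesis using g(1) by (cases \<gamma>) simp_all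
        qed
        ultimately show ?thesis using 1 hl zr by (simp add: xi_at_iff wmult_single)
      next
        case 2
        have "hd \<gamma> \<noteq> linv \<sigma>" using good_not_inv[OF 2(2)] .
        then have "\<sigma> \<noteq> linv (hd ?z)" using hdz by (metis linv_linv)
        then have p: "push \<sigma> ?z = (\<sigma> # \<gamma>) @ \<alpha>" using push_cases[OF zr, of \<sigma>] g(1) by auto
        have "rep (\<sigma> # \<gamma>) \<alpha>" using r 2 g(1) by (simp add: rep_def chain_Cons)
        then have "(\<sigma> # \<gamma>) @ \<alpha> \<in> \<xi>" unfolding \<xi>_def N_def by blast
        then show ?thesis using p 2(1) zr by (simp add: xi_at_iff wmult_single)
      qed
    qed
  qed
  have "\<xi> \<in> Omega G"
    unfolding Omega_def
  proof (intro CollectI conjI ballI allI)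
    show "\<xi> \<subseteq> FG G" by (rule xiFG)
    show "[] \<in> \<xi>" using S(2) by (simp add: \<xi>_def)
    show "drop k w \<in> \<xi>" if "w \<in> \<xi>" for w k using xidrop[OF that] .
    fix \<alpha> assume "\<alpha> \<in> \<xi>"
    then consider "\<alpha> \<in> S" | \<gamma> \<alpha>0 where "rep \<gamma> \<alpha>0" "\<alpha> = \<gamma> @ \<alpha>0" by (auto simp: \<xi>_def N_def)
    then show "local_ok G (xi_at G \<xi> \<alpha>)"
    proof cases
      case 1 then show ?thesis using locS Af by simp
    next
      case 2
      then have "hd \<gamma> \<in> letters G" by (auto simp: rep_def)
      then show ?thesis using 2 locN can_ok by simp
    qed
  qed
  moreover have "S \<subseteq> \<xi>" by (simp add: \<xi>_def)
  moreover have "\<forall>\<alpha>\<in>S. local_ok G (xi_at G S \<alpha>) \<longrightarrow> xi_at G \<xi> \<alpha> = xi_at G S \<alpha>"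
    using locS by (simp add: Af_def)
  ultimately show ?thesis by blast
qed

end

context fbg begin

lemma adm_reduced: "admissible G w \<Longrightarrow> reduced w"
  unfolding admissible_def reduced_def using adm_not_inv by blast

lemma adm_letters: "admissible G w \<Longrightarrow> set w \<subseteq> letters G"
  unfolding admissible_def by blast

lemma adm_nth: "admissible G w \<Longrightarrow> Suc i < length w \<Longrightarrow> adm_pair G (w ! i) (w ! Suc i)"
  unfolding admissible_def by blast

lemma ball_iff: "y \<in> ball_n n \<xi> \<longleftrightarrow> y \<in> \<xi> \<and> length y \<le> n" by (simp add: ball_n_def)

lemma length_wmult: "reduced y \<Longrightarrow> length (wmult [\<tau>] y) \<le> Suc (length y)"
  by (simp add: wmult_single length_push)

lemma single_last: "length v = 1 \<Longrightarrow> v = [last v]"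
  by (cases v) auto

end

locale fwd = fbg G for G :: "('v, 'e) sep_graph" +
  fixes \<xi> \<xi>' :: "'e word set" and \<beta> \<beta>' \<alpha> :: "'e word" and n m :: nat
  assumes xi: "\<xi> \<in> Omega G" and xi': "\<xi>' \<in> Omega G"
    and bin: "\<beta> \<in> \<xi>" and bl: "length \<beta> = n" and bne: "\<beta> \<noteq> []"
    and b'in: "\<beta>' \<in> \<xi>'" and b'l: "length \<beta>' = m" and b'ne: "\<beta>' \<noteq> []"
    and lw: "admissible G (linv (hd \<beta>) # \<alpha> @ [hd \<beta>'])"
begin

definition "rest = \<alpha> @ \<beta>'"
definition "W = winv \<beta> @ rest"
definition "B = ball_n n \<xi>"
definition "B' = ball_n m \<xi>'"
definition "Q = {drop j rest | j. j \<le> length \<alpha>}"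
definition "T = tr B W"
definition "S = B' \<union> Q \<union> T"
definition "a = last (linv (hd \<beta>) # \<alpha>)"

lemma lw_red: "reduced (linv (hd \<beta>) # \<alpha> @ [hd \<beta>'])" using adm_reduced[OF lw] .
lemma lw_letters: "set (linv (hd \<beta>) # \<alpha> @ [hd \<beta>']) \<subseteq> letters G" using adm_letters[OF lw] .

lemma b_red: "reduced \<beta>" using Om_red[OF xi bin] .
lemma b'_red: "reduced \<beta>'" using Om_red[OF xi' b'in] .
lemma b_letters: "set \<beta> \<subseteq> letters G" using Om_letters[OF xi bin] .
lemma b'_letters: "set \<beta>' \<subseteq> letters G" using Om_letters[OF xi' b'in] .

lemma b'_split: "\<beta>' = hd \<beta>' # tl \<beta>'" using b'ne by simp
lemma b_split: "\<beta> = hd \<beta> # tl \<beta>" using bne by simp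

lemma rest_red: "reduced rest"
proof -
  have "reduced (\<alpha> @ [hd \<beta>'])" using reduced_drop[OF lw_red, of 1] by simp
  moreover have "reduced (hd \<beta>' # tl \<beta>')" using b'_red b'_split by simp
  ultimately have "reduced (\<alpha> @ hd \<beta>' # tl \<beta>')" by (rule reduced_glue)
  then show ?thesis using b'_split by (simp add: rest_def)
qed

lemma rest_red2: "reduced (linv (hd \<beta>) # rest)"
proof -
  have "reduced ((linv (hd \<beta>) # \<alpha>) @ [hd \<beta>'])" using lw_red by simp
  moreover have "reduced (hd \<beta>' # tl \<beta>')" using b'_red b'_split by simp
  ultimately have "reduced ((linv (hd \<beta>) # \<alpha>) @ hd \<beta>' # tl \<beta>')" by (rule reduced_glue)
  then show ?thesis using b'_split by (simp add: rest_def)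
qed

lemma W_red: "reduced W"
proof -
  have "reduced (winv \<beta>)" using b_red by simp
  then have "reduced (winv (tl \<beta>) @ [linv (hd \<beta>)])" using b_split by (metis winv_Cons)
  then have "reduced (winv (tl \<beta>) @ linv (hd \<beta>) # rest)" using rest_red2 by (rule reduced_glue)
  then show ?thesis unfolding W_def using b_split by (metis append.assoc append_Cons append_Nil winv_Cons)
qed

lemma rest_letters: "set rest \<subseteq> letters G" using lw_letters b'_letters by (auto simp: rest_def)

lemma W_FG: "W \<in> FG G"
  using W_red rest_letters b_letters by (auto simp: FG_iff W_def set_winv)

lemma B_sub: "B \<subseteq> \<xi>" and B'_sub: "B' \<subseteq> \<xi>'" by (auto simp: B_def B'_def ball_n_def)
lemma B_red: "\<forall>b\<in>B. reduced b" using B_sub Om_red[OF xi] by blast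

lemma len_rest: "length rest = length \<alpha> + m" using b'l by (simp add: rest_def)

lemma T_form:
  assumes y: "y \<in> B"
  shows "red (y @ W) = red (y @ winv \<beta>) @ rest"
    and "red (y @ winv \<beta>) = [] \<or> last (red (y @ winv \<beta>)) = linv (hd \<beta>)"
    and "red (y @ winv \<beta>) = [] \<longleftrightarrow> y = \<beta>"
proof -
  have yr: "reduced y" using B_red y by blast
  have yl: "length y \<le> length \<beta>" using y bl by (simp add: B_def ball_iff)
  let ?u = "red (y @ winv \<beta>)"
  show u: "?u = [] \<or> last ?u = linv (hd \<beta>)" using red_u_winv_beta[OF yr b_red bne yl] by blast
  have "red (y @ W) = red (?u @ rest)" unfolding W_def by (simp add: red_append_red_left)
  moreover have "reduced (?u @ rest)"
  proof (cases "?u = []")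
    case True then show ?thesis using rest_red by simp
  next
    case False
    then have "last ?u = linv (hd \<beta>)" using u by simp
    then show ?thesis using rest_red2 False by (auto simp: reduced_append reduced_Cons)
  qed
  ultimately show "red (y @ W) = ?u @ rest" by (simp add: red_id)
  show "?u = [] \<longleftrightarrow> y = \<beta>"
  proof
    assume "?u = []"
    then have "red (?u @ \<beta>) = \<beta>" using b_red by (simp add: red_id)
    moreover have "red (?u @ \<beta>) = y" using yr by (simp add: red_append_red_left red_cancel_right' red_id)
    ultimately show "y = \<beta>" by simp
  next
    assume "y = \<beta>" then show "?u = []" using red_cancel_right[of "[]" \<beta>] by simp
  qed
qed

lemma T_elem: "z \<in> T \<Longrightarrow> \<exists>y u. y \<in> B \<and> z = red (y @ W) \<and> z = u @ rest \<and> (u = [] \<or> last u = linv (hd \<beta>)) \<and> (u = [] \<longleftrightarrow> y = \<beta>)"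
  unfolding T_def tr_def using T_form by blast

lemma W_in_T: "W \<in> T"
proof -
  have "[] \<in> B" using Om_Nil[OF xi] by (simp add: B_def ball_iff)
  then show ?thesis unfolding T_def tr_def using W_red by (auto simp: red_id intro!: image_eqI[of _ _ "[]"])
qed

lemma rest_in_T: "rest \<in> T"
proof -
  have "\<beta> \<in> B" using bin bl by (simp add: B_def ball_iff)
  then have "red (\<beta> @ W) \<in> T" unfolding T_def by (rule red_tr_mem)
  moreover have "red (\<beta> @ W) = rest" using T_form(1)[OF \<open>\<beta> \<in> B\<close>] red_cancel_right[of "[]" \<beta>] by simp
  ultimately show ?thesis by simp
qed

lemma T_len: "z \<in> T \<Longrightarrow> length rest \<le> length z"
  using T_elem by fastforce

lemma QT_form: "z \<in> Q \<union> T \<Longrightarrow> \<exists>v. z = v @ \<beta>' \<and> (v = [] \<or> last v = a)"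
proof -
  assume "z \<in> Q \<union> T"
  then show ?thesis
  proof
    assume "z \<in> Q"
    then obtain j where j: "z = drop j rest" "j \<le> length \<alpha>" by (auto simp: Q_def)
    then have "z = drop j \<alpha> @ \<beta>'" by (simp add: rest_def)
    moreover have "drop j \<alpha> = [] \<or> last (drop j \<alpha>) = a" unfolding a_def by (cases "j < length \<alpha>") (auto simp: last_drop)
    ultimately show ?thesis by blast
  next
    assume "z \<in> T"
    then obtain y u where h: "z = u @ rest" "u = [] \<or> last u = linv (hd \<beta>)" using T_elem by blast
    have "z = (u @ \<alpha>) @ \<beta>'" using h by (simp add: rest_def)
    moreover have "u @ \<alpha> = [] \<or> last (u @ \<alpha>) = a" unfolding a_def using h(2) by (cases "\<alpha> = []") auto
    ultimately show ?thesis by blast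
  qed
qed

lemma Q_len: "z \<in> Q \<Longrightarrow> m \<le> length z \<and> length z \<le> length rest"
  by (auto simp: Q_def len_rest)

end

context fwd begin

lemma B'_red: "\<forall>b\<in>B'. reduced b" using B'_sub Om_red[OF xi'] by blast

lemma S_FG: "S \<subseteq> FG G"
proof -
  have "B' \<subseteq> FG G" using B'_sub Om_FG[OF xi'] by blast
  moreover have "Q \<subseteq> FG G"
  proof
    fix z assume "z \<in> Q"
    then obtain j where "z = drop j rest" by (auto simp: Q_def)
    then show "z \<in> FG G" using rest_red rest_letters set_drop_subset[of j rest]
      by (auto simp: FG_iff reduced_drop)
  qed
  moreover have "T \<subseteq> FG G" unfolding T_def using B_sub Om_FG[OF xi] W_FG by (intro tr_FG) auto
  ultimately show ?thesis by (auto simp: S_def)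
qed

lemma S_red: "z \<in> S \<Longrightarrow> reduced z" using S_FG by (auto simp: FG_iff)

lemma S_Nil: "[] \<in> S" using Om_Nil[OF xi'] by (simp add: S_def B'_def ball_iff)

lemma drop_rest_S: "drop j rest \<in> S"
proof (cases "j \<le> length \<alpha>")
  case True then show ?thesis by (auto simp: S_def Q_def)
next
  case False
  then have "drop j rest = drop (j - length \<alpha>) \<beta>'" by (simp add: rest_def)
  moreover have "drop (j - length \<alpha>) \<beta>' \<in> B'" using Om_drop[OF xi' b'in] b'l by (simp add: B'_def ball_iff)
  ultimately show ?thesis by (simp add: S_def)
qed

lemma drop_W_S: "drop j W \<in> S"
proof (cases "j \<le> n")
  case True
  let ?i = "n - j"
  have y: "drop ?i \<beta> \<in> B" using Om_drop[OF xi bin] bl by (simp add: B_def ball_iff)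
  have "red (drop ?i \<beta> @ W) = red (drop ?i \<beta> @ winv \<beta>) @ rest" using T_form(1)[OF y] .
  also have "red (drop ?i \<beta> @ winv \<beta>) = winv (take ?i \<beta>)" using red_drop_winv[OF b_red] .
  also have "winv (take ?i \<beta>) = drop j (winv \<beta>)"
  proof -
    have "winv \<beta> = winv (drop ?i \<beta>) @ winv (take ?i \<beta>)" by (metis append_take_drop_id winv_append)
    moreover have "length (winv (drop ?i \<beta>)) = j" using bl True by simp
    ultimately show ?thesis by (metis append_eq_conv_conj)
  qed
  finally have "red (drop ?i \<beta> @ W) = drop j W" using True bl by (simp add: W_def)
  moreover have "red (drop ?i \<beta> @ W) \<in> T" unfolding T_def using y by (rule red_tr_mem)
  ultimately show ?thesis by (simp add: S_def)
next
  case False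
  then have "drop j W = drop (j - n) rest" using bl by (simp add: W_def)
  then show ?thesis using drop_rest_S by simp
qed

lemma S_drop: "z \<in> S \<Longrightarrow> drop k z \<in> S"
proof -
  assume "z \<in> S"
  then consider "z \<in> B'" | "z \<in> Q" | "z \<in> T" by (auto simp: S_def)
  then show ?thesis
  proof cases
    case 1 then show ?thesis using Om_drop[OF xi'] by (auto simp: S_def B'_def ball_iff)
  next
    case 2 then show ?thesis using drop_rest_S by (auto simp: Q_def)
  next
    case 3
    then obtain y where y: "y \<in> B" "z = red (y @ W)" by (auto simp: T_def tr_def)
    have yr: "reduced y" using B_red y(1) by blast
    from suffix_red[OF yr W_red, of k] show ?thesis
    proof (elim disjE exE)
      fix j assume "drop k (red (y @ W)) = red (drop j y @ W)"
      moreover have "drop j y \<in> B" using y(1) Om_drop[OF xi] by (auto simp: B_def ball_iff)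
      ultimately show ?thesis using y(2) by (auto simp: S_def T_def intro: red_tr_mem)
    next
      fix j assume "drop k (red (y @ W)) = drop j W"
      then show ?thesis using y(2) drop_W_S by simp
    qed
  qed
qed

lemma wm_cases:
  assumes "reduced z"
  obtains "z \<noteq> []" "\<tau> = linv (hd z)" "wmult [\<tau>] z = tl z"
        | "wmult [\<tau>] z = \<tau> # z"
  using push_cases[OF assms, of \<tau>] assms by (auto simp: wmult_single)

lemma LB':
  assumes z: "z \<in> B'" and t: "\<tau> \<in> xi_at G S z"
  shows "\<tau> \<in> xi_at G B' z \<or> (z = \<beta>' \<and> \<tau> = a)"
proof (rule ccontr)
  assume nt: "\<not> (\<tau> \<in> xi_at G B' z \<or> (z = \<beta>' \<and> \<tau> = a))"
  have tl: "\<tau> \<in> letters G" and e: "wmult [\<tau>] z \<in> S" using t by (auto simp: xi_at_iff)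
  have zr: "reduced z" using B'_red z by blast
  have zl: "length z \<le> m" using z by (simp add: B'_def ball_iff)
  have nB: "wmult [\<tau>] z \<notin> B'" using nt tl by (auto simp: xi_at_iff)
  then have "wmult [\<tau>] z \<in> Q \<union> T" using e by (simp add: S_def)
  then obtain v where v: "wmult [\<tau>] z = v @ \<beta>'" "v = [] \<or> last v = a" using QT_form by blast
  have "v \<noteq> []" using v nB b'in b'l by (auto simp: B'_def ball_iff)
  have len: "length (wmult [\<tau>] z) \<le> Suc m" using length_wmult[OF zr, of \<tau>] zl by simp
  then have "length v = 1" using v(1) b'l \<open>v \<noteq> []\<close> by (cases v) auto
  then have va: "v = [a]" using v(2) \<open>v \<noteq> []\<close> single_last by fastforce
  show False
  proof (cases rule: wm_cases[OF zr, of \<tau>])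
    case 1
    then have "length (wmult [\<tau>] z) < m + 1" using zl by simp
    then show False using v(1) va b'l by simp
  next
    case 2
    then have "\<tau> # z = a # \<beta>'" using v(1) va by simp
    then show False using nt by simp
  qed
qed

lemma LB'_full: "z \<in> B' \<Longrightarrow> length z < m \<Longrightarrow> xi_at G \<xi>' z \<subseteq> xi_at G S z"
proof
  fix \<tau> assume z: "z \<in> B'" "length z < m" and t: "\<tau> \<in> xi_at G \<xi>' z"
  have zr: "reduced z" using B'_red z by blast
  have "length (wmult [\<tau>] z) \<le> m" using length_wmult[OF zr, of \<tau>] z(2) by simp
  then have "wmult [\<tau>] z \<in> B'" using t by (simp add: xi_at_iff B'_def ball_iff)
  then show "\<tau> \<in> xi_at G S z" using t by (simp add: xi_at_iff S_def)
qed

lemma max_loc: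
  assumes "reduced z" "length z = k" "\<tau> \<in> xi_at G (ball_n k \<zeta>) z"
  shows "\<tau> = linv (hd z)"
proof (cases rule: wm_cases[OF assms(1), of \<tau>])
  case 1 then show ?thesis by simp
next
  case 2 then show ?thesis using assms(2,3) by (simp add: xi_at_iff ball_iff)
qed

lemma LT:
  assumes y: "y \<in> B" and t: "\<tau> \<in> xi_at G S (red (y @ W))"
  shows "\<tau> \<in> xi_at G B y \<or> (y = \<beta> \<and> \<tau> = linv (hd rest))"
proof -
  let ?z = "red (y @ W)"
  have xT: "xi_at G T ?z = xi_at G B y" unfolding T_def using xi_at_tr[OF B_red] .
  have tl: "\<tau> \<in> letters G" and e: "wmult [\<tau>] ?z \<in> S" using t by (auto simp: xi_at_iff)
  obtain u where u: "?z = u @ rest" "u = [] \<or> last u = linv (hd \<beta>)" "u = [] \<longleftrightarrow> y = \<beta>"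
    using T_form[OF y] by blast
  have zr: "reduced ?z" by simp
  show ?thesis
  proof (cases "wmult [\<tau>] ?z \<in> T")
    case True then show ?thesis using xT tl by (auto simp: xi_at_iff)
  next
    case False
    then have eBQ: "wmult [\<tau>] ?z \<in> B' \<union> Q" using e by (simp add: S_def)
    have le: "length (wmult [\<tau>] ?z) \<le> length rest"
      using eBQ Q_len len_rest by (auto simp: B'_def ball_iff)
    show ?thesis
    proof (cases rule: wm_cases[OF zr, of \<tau>])
      case 2 then show ?thesis using le u(1) by simp
    next
      case 1
      show ?thesis
      proof (cases "u = []")
        case True
        then show ?thesis using 1 u by simp
      next
        case False
        have "length (tl ?z) \<le> length rest" using le 1 by simp
        then have "length u = 1" using u(1) False by (cases u) auto
        then have "u = [linv (hd \<beta>)]" using u(2) False single_last by fastforce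
        then have "wmult [\<tau>] ?z = rest" using 1 u(1) by simp
        then have "\<tau> \<in> xi_at G T ?z" using rest_in_T tl by (simp add: xi_at_iff)
        then show ?thesis using xT by simp
      qed
    qed
  qed
qed

lemma LT_sub: "y \<in> B \<Longrightarrow> xi_at G B y \<subseteq> xi_at G S (red (y @ W))"
proof -
  assume y: "y \<in> B"
  have "xi_at G T (red (y @ W)) = xi_at G B y" unfolding T_def using xi_at_tr[OF B_red] .
  then show ?thesis using xi_at_mono[of T S] by (auto simp: S_def)
qed

lemma LQ:
  assumes j: "0 < j" "j < length \<alpha>" and t: "\<tau> \<in> xi_at G S (drop j rest)"
  shows "\<tau> = linv (hd (drop j rest)) \<or> \<tau> = \<alpha> ! (j - 1)"
proof -
  let ?z = "drop j rest"
  have zr: "reduced ?z" using reduced_drop[OF rest_red] .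
  have e: "wmult [\<tau>] ?z \<in> S" using t by (simp add: xi_at_iff)
  show ?thesis
  proof (cases rule: wm_cases[OF zr, of \<tau>])
    case 1 then show ?thesis by simp
  next
    case 2
    have lz: "length (\<tau> # ?z) = length rest - j + 1" using j len_rest by simp
    have "\<tau> # ?z \<notin> B'" using lz j len_rest by (auto simp: B'_def ball_iff)
    then consider "\<tau> # ?z \<in> Q" | "\<tau> # ?z \<in> T" using e 2 by (auto simp: S_def)
    then show ?thesis
    proof cases
      case 1
      then obtain j' where j': "\<tau> # ?z = drop j' rest" by (auto simp: Q_def)
      have "length rest - j' = length rest - j + 1" using arg_cong[OF j', of length] lz by simp
      then have "j' = j - 1" using j len_rest by arith
      then have "\<tau> # ?z = drop (j - 1) rest" using j' by simp
      also have "\<dots> = rest ! (j - 1) # drop j rest" using Cons_nth_drop_Suc[of "j - 1" rest] j len_rest by simp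
      finally have "\<tau> = rest ! (j - 1)" by simp
      moreover have "rest ! (j - 1) = \<alpha> ! (j - 1)" using j unfolding rest_def by (intro nth_append_left) simp
      ultimately show ?thesis by simp
    next
      case 2
      then have "length rest \<le> length (\<tau> # ?z)" by (rule T_len)
      then have j1: "j = 1" using lz j len_rest by simp
      obtain y u where h: "\<tau> # ?z = u @ rest" "u = [] \<or> last u = linv (hd \<beta>)" using T_elem[OF 2] by blast
      have "length u = 0" using arg_cong[OF h(1), of length] lz j1 len_rest j by (simp del: length_0_conv; arith)
      then have "u = []" by simp
      then have "\<tau> # drop 1 rest = rest" using h(1) j1 by simp
      then have "\<tau> = hd rest" by (metis list.sel(1))
      moreover have "hd rest = \<alpha> ! 0" using j unfolding rest_def by (cases \<alpha>) auto
      ultimately show ?thesis using j1 by simp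
    qed
  qed
qed

end

context fwd begin

abbreviation "lw \<equiv> linv (hd \<beta>) # \<alpha> @ [hd \<beta>']"

lemma lw_adm: "Suc i < length \<alpha> + 2 \<Longrightarrow> adm_pair G (lw ! i) (lw ! Suc i)"
  using adm_nth[OF lw] by simp

lemma hd_rest: "hd rest = lw ! 1" unfolding rest_def using b'ne by (cases \<alpha>) auto

lemma lw_a: "lw ! length \<alpha> = a"
  unfolding a_def by (cases "\<alpha> = []") (auto simp: nth_append last_conv_nth nth_Cons')

lemma lw_last: "lw ! Suc (length \<alpha>) = hd \<beta>'" by (simp add: nth_append)

lemma lw_mid: "0 < j \<Longrightarrow> j < length \<alpha> \<Longrightarrow> lw ! j = \<alpha> ! (j - 1) \<and> lw ! Suc j = \<alpha> ! j"
  by (cases j) (auto simp: nth_append)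

lemma lw_let: "i < length \<alpha> + 2 \<Longrightarrow> lw ! i \<in> letters G"
  using lw_letters by (metis length_Cons length_append_singleton add_2_eq_Suc' nth_mem subsetD)

lemma S_loc: "z \<in> S \<Longrightarrow> \<exists>A. local_ok G A \<and> xi_at G S z \<subseteq> A"
proof -
  assume zS: "z \<in> S"
  have caseT: "\<exists>A. local_ok G A \<and> xi_at G S z \<subseteq> A" if zT: "z \<in> T"
  proof -
    obtain y where y: "y \<in> B" "z = red (y @ W)" using zT by (auto simp: T_def tr_def)
    show ?thesis
    proof (cases "y = \<beta>")
      case False
      have "xi_at G S z \<subseteq> xi_at G \<xi> y"
        using LT[OF y(1)] y(2) False xi_at_mono[OF B_sub] by blast
      moreover have "local_ok G (xi_at G \<xi> y)" using Om_local[OF xi] y(1) B_sub by blast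
      ultimately show ?thesis by blast
    next
      case True
      have yr: "reduced \<beta>" using b_red .
      have "xi_at G S z \<subseteq> {linv (hd \<beta>), linv (hd rest)}"
      proof
        fix \<tau> assume "\<tau> \<in> xi_at G S z"
        then have "\<tau> \<in> xi_at G B \<beta> \<or> \<tau> = linv (hd rest)" using LT[OF y(1)] y(2) True by blast
        then show "\<tau> \<in> {linv (hd \<beta>), linv (hd rest)}"
        proof
          assume "\<tau> \<in> xi_at G B \<beta>"
          then have "\<tau> = linv (hd \<beta>)" using max_loc[OF b_red bl, of \<tau> \<xi>] by (simp add: B_def)
          then show ?thesis by simp
        qed simp
      qed
      moreover obtain A where "local_ok G A" "linv (hd rest) \<in> A" "linv (hd \<beta>) \<in> A"
        using pair_ok[of "lw ! 0" "lw ! 1"] lw_let[of 0] lw_let[of 1] lw_adm[of 0] hd_rest by (simp, blast)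
      ultimately show ?thesis by blast
    qed
  qed
  have caseB': "\<exists>A. local_ok G A \<and> xi_at G S z \<subseteq> A" if zB: "z \<in> B'"
  proof (cases "z = \<beta>'")
    case False
    have "xi_at G S z \<subseteq> xi_at G \<xi>' z" using LB'[OF zB] False xi_at_mono[OF B'_sub] by blast
    moreover have "local_ok G (xi_at G \<xi>' z)" using Om_local[OF xi'] zB B'_sub by blast
    ultimately show ?thesis by blast
  next
    case True
    have "xi_at G S z \<subseteq> {linv (hd \<beta>'), a}"
    proof
      fix \<tau> assume "\<tau> \<in> xi_at G S z"
      then have "\<tau> \<in> xi_at G B' \<beta>' \<or> \<tau> = a" using LB'[OF zB] True by blast
      then show "\<tau> \<in> {linv (hd \<beta>'), a}"
      proof
        assume "\<tau> \<in> xi_at G B' \<beta>'"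
        then have "\<tau> = linv (hd \<beta>')" using max_loc[OF b'_red b'l, of \<tau> \<xi>'] by (simp add: B'_def)
        then show ?thesis by simp
      qed simp
    qed
    moreover obtain A where "local_ok G A" "linv (hd \<beta>') \<in> A" "a \<in> A"
      using pair_ok[of "lw ! length \<alpha>" "lw ! Suc (length \<alpha>)"] lw_let[of "length \<alpha>"] lw_let[of "Suc (length \<alpha>)"] lw_adm[of "length \<alpha>"] lw_a lw_last by (simp, blast)
    ultimately show ?thesis by blast
  qed
  from zS consider "z \<in> B'" | "z \<in> T" | j where "z = drop j rest" "j \<le> length \<alpha>"
    by (auto simp: S_def Q_def)
  then show ?thesis
  proof cases
    case 1 then show ?thesis by (rule caseB')
  next
    case 2 then show ?thesis by (rule caseT)
  next
    case 3
    show ?thesis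
    proof (cases "j = 0")
      case True then show ?thesis using caseT rest_in_T 3 by simp
    next
      case F1: False
      show ?thesis
      proof (cases "j = length \<alpha>")
        case True
        then have "z = \<beta>'" using 3 by (simp add: rest_def)
        then show ?thesis using caseB' b'in b'l by (simp add: B'_def ball_iff)
      next
        case False
        then have j: "0 < j" "j < length \<alpha>" using F1 3 by auto
        have "xi_at G S z \<subseteq> {linv (hd z), \<alpha> ! (j - 1)}" using LQ[OF j] 3 by blast
        moreover have "hd z = lw ! Suc j" using 3 j lw_mid[OF j] by (simp add: rest_def hd_drop_conv_nth nth_append)
        moreover obtain A where "local_ok G A" "linv (lw ! Suc j) \<in> A" "lw ! j \<in> A"
          using pair_ok[of "lw ! j" "lw ! Suc j"] lw_let[of j] lw_let[of "Suc j"] lw_adm[of j] j by (simp, blast)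
        ultimately show ?thesis using lw_mid[OF j] by auto
      qed
    qed
  qed
qed

lemma fwd_main:
  "\<exists>g x. g \<in> FG G \<and> x \<in> Omega G \<and> g \<in> x \<and> ball_n n x = ball_n n \<xi> \<and>
     theta g x \<in> Omega G \<and> ball_n m (theta g x) = ball_n m \<xi>'"
proof -
  obtain \<eta> where eta: "\<eta> \<in> Omega G" "S \<subseteq> \<eta>"
    and loc: "\<And>z. z \<in> S \<Longrightarrow> local_ok G (xi_at G S z) \<Longrightarrow> xi_at G \<eta> z = xi_at G S z"
    using extension[OF S_FG S_Nil] S_drop S_loc by blast
  have etared: "\<forall>b\<in>\<eta>. reduced b" using Om_red[OF eta(1)] by blast
  have ball1: "ball_n m \<eta> = ball_n m \<xi>'"
  proof (rule ball_eq[OF eta(1) xi'])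
    show "ball_n m \<xi>' \<subseteq> \<eta>" using eta(2) by (auto simp: S_def B'_def)
    fix y assume y: "y \<in> ball_n m \<xi>'" "length y < m"
    have yB: "y \<in> B'" using y by (simp add: B'_def)
    have "xi_at G S y = xi_at G \<xi>' y"
    proof
      show "xi_at G S y \<subseteq> xi_at G \<xi>' y" using LB'[OF yB] y(2) b'l xi_at_mono[OF B'_sub] by blast
      show "xi_at G \<xi>' y \<subseteq> xi_at G S y" using LB'_full[OF yB y(2)] .
    qed
    then show "xi_at G \<eta> y = xi_at G \<xi>' y" using loc[of y] yB Om_local[OF xi'] y by (simp add: S_def ball_iff)
  qed
  define h where "h = winv W"
  have hFG: "h \<in> FG G" using W_FG by (auto simp: h_def FG_iff set_winv)
  have Win: "W \<in> \<eta>" using W_in_T eta(2) by (auto simp: S_def)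
  define x where "x = tr \<eta> h"
  have xO: "x \<in> Omega G" unfolding x_def using tr_Omega[OF eta(1) hFG] Win by (simp add: h_def)
  have memx: "y \<in> x \<longleftrightarrow> reduced y \<and> red (y @ W) \<in> \<eta>" for y
    unfolding x_def h_def using mem_tr[OF etared] by simp
  have ball2: "ball_n n x = ball_n n \<xi>"
  proof (rule ball_eq[OF xO xi])
    show "ball_n n \<xi> \<subseteq> x"
    proof
      fix y assume y: "y \<in> ball_n n \<xi>"
      then have "red (y @ W) \<in> T" unfolding T_def B_def by (rule red_tr_mem)
      then show "y \<in> x" using memx eta(2) B_red y by (auto simp: S_def B_def)
    qed
    fix y assume y: "y \<in> ball_n n \<xi>" "length y < n"
    have yB: "y \<in> B" using y by (simp add: B_def)
    have yr: "reduced y" using B_red yB by blast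
    let ?z = "red (y @ W)"
    have zS: "?z \<in> S" using yB by (simp add: S_def T_def red_tr_mem)
    have "red (?z @ h) = y" unfolding h_def using yr
      by (simp add: red_append_red_left red_cancel_right red_id)
    then have "xi_at G x y = xi_at G \<eta> ?z" unfolding x_def using xi_at_tr[OF etared, of h ?z] by simp
    moreover have eqS: "xi_at G S ?z = xi_at G \<xi> y"
    proof
      have "y \<noteq> \<beta>" using y(2) bl by auto
      then show "xi_at G S ?z \<subseteq> xi_at G \<xi> y" using LT[OF yB] xi_at_mono[OF B_sub] by blast
      have "xi_at G \<xi> y \<subseteq> xi_at G B y"
      proof
        fix \<tau> assume "\<tau> \<in> xi_at G \<xi> y"
        moreover have "length (wmult [\<tau>] y) \<le> n" using length_wmult[OF yr, of \<tau>] y(2) by simp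
        ultimately show "\<tau> \<in> xi_at G B y" by (simp add: xi_at_iff B_def ball_iff)
      qed
      then show "xi_at G \<xi> y \<subseteq> xi_at G S ?z" using LT_sub[OF yB] by blast
    qed
    moreover have "local_ok G (xi_at G \<xi> y)" using Om_local[OF xi] yB B_sub by blast
    ultimately show "xi_at G x y = xi_at G \<xi> y" using loc[OF zS] by simp
  qed
  have gin: "h \<in> x"
  proof -
    have "red ([] @ h) = h" using hFG by (simp add: red_id FG_iff)
    then show ?thesis unfolding x_def using Om_Nil[OF eta(1)] red_tr_mem by metis
  qed
  have th: "theta h x = \<eta>"
    unfolding theta_tr x_def h_def using tr_tr[OF etared, of "winv W"] by simp
  show ?thesis using hFG xO gin ball2 th eta(1) ball1 by metis
qed

end

context fbg begin

definition cyl :: "nat \<Rightarrow> 'e word set \<Rightarrow> 'e word set set" where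
  "cyl n \<xi> = {\<eta> \<in> Omega G. ball_n n \<eta> = ball_n n \<xi>}"

abbreviation "fm \<xi> \<equiv> restrict (\<lambda>w. w \<in> \<xi>) (FG G)"
abbreviation "PT \<equiv> product_topology (\<lambda>_. discrete_topology (UNIV :: bool set)) (FG G)"

lemma Omega_top_eq: "Omega_top G = pullback_topology (Omega G) fm PT"
  by (simp add: Omega_top_def)

lemma topspace_Om: "topspace (Omega_top G) = Omega G"
proof -
  have "fm \<xi> \<in> topspace PT" for \<xi> by (simp add: PiE_iff)
  then show ?thesis unfolding Omega_top_eq topspace_pullback_topology by blast
qed

lemma finite_short: "finite {w \<in> FG G. length w \<le> n}"
proof -
  have "{w \<in> FG G. length w \<le> n} \<subseteq> {xs. set xs \<subseteq> letters G \<and> length xs \<le> n}" by (auto simp: FG_iff)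
  moreover have "finite {xs. set xs \<subseteq> letters G \<and> length xs \<le> n}"
    using finite_lists_length_le[OF finite_letters] .
  ultimately show ?thesis by (rule finite_subset)
qed

lemma ball_eq_mem: "ball_n K a = ball_n K b \<Longrightarrow> length w \<le> K \<Longrightarrow> (w \<in> a) = (w \<in> b)"
  unfolding ball_n_def by blast

lemma ball_mono: "k \<le> K \<Longrightarrow> ball_n K a = ball_n K b \<Longrightarrow> ball_n k a = ball_n k b"
  unfolding ball_n_def by (smt (verit) Collect_cong mem_Collect_eq order_trans)

lemma cyl_self: "\<xi> \<in> Omega G \<Longrightarrow> \<xi> \<in> cyl n \<xi>" by (simp add: cyl_def)

lemma cyl_mono: "k \<le> K \<Longrightarrow> cyl K \<xi> \<subseteq> cyl k \<xi>"
proof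
  fix \<eta> assume "k \<le> K" "\<eta> \<in> cyl K \<xi>"
  then show "\<eta> \<in> cyl k \<xi>" unfolding cyl_def using ball_mono[of k K \<eta> \<xi>] by blast
qed

lemma cyl_open:
  assumes xi: "\<xi> \<in> Omega G"
  shows "openin (Omega_top G) (cyl n \<xi>)"
proof -
  define X where "X w = (if w \<in> FG G \<and> length w \<le> n then {b. b = (w \<in> \<xi>)} else UNIV)" for w
  have op: "openin PT (Pi\<^sub>E (FG G) X)"
  proof (rule product_topology_basis)
    show "openin (discrete_topology UNIV) (X i)" for i by simp
    have "{i. X i \<noteq> topspace (discrete_topology UNIV)} \<subseteq> {w \<in> FG G. length w \<le> n}"
      by (auto simp: X_def)
    then show "finite {i. X i \<noteq> topspace (discrete_topology UNIV)}"
      using finite_short finite_subset by blast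
  qed
  have "cyl n \<xi> = fm -` Pi\<^sub>E (FG G) X \<inter> Omega G"
  proof (intro equalityI subsetI)
    fix \<eta> assume "\<eta> \<in> cyl n \<xi>"
    then have e: "\<eta> \<in> Omega G" "ball_n n \<eta> = ball_n n \<xi>" by (auto simp: cyl_def)
    have "fm \<eta> \<in> Pi\<^sub>E (FG G) X"
      using ball_eq_mem[OF e(2)] by (auto simp: X_def PiE_iff)
    then show "\<eta> \<in> fm -` Pi\<^sub>E (FG G) X \<inter> Omega G" using e by simp
  next
    fix \<eta> assume "\<eta> \<in> fm -` Pi\<^sub>E (FG G) X \<inter> Omega G"
    then have e: "\<eta> \<in> Omega G" and p: "\<forall>w\<in>FG G. length w \<le> n \<longrightarrow> (w \<in> \<eta>) = (w \<in> \<xi>)"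
      by (auto simp: X_def PiE_iff)
    have "ball_n n \<eta> = ball_n n \<xi>"
      using p Om_FG[OF e] Om_FG[OF xi] by (auto simp: ball_n_def)
    then show "\<eta> \<in> cyl n \<xi>" using e by (simp add: cyl_def)
  qed
  then show ?thesis unfolding Omega_top_eq openin_pullback_topology using op by blast
qed

lemma open_sub: "openin (Omega_top G) U \<Longrightarrow> U \<subseteq> Omega G"
  using openin_subset topspace_Om by metis

lemma cyl_sub:
  assumes U: "openin (Omega_top G) U" and xi: "\<xi> \<in> U"
  shows "\<exists>n\<ge>1. cyl n \<xi> \<subseteq> U"
proof -
  obtain V where V: "openin PT V" "U = fm -` V \<inter> Omega G"
    using U unfolding Omega_top_eq openin_pullback_topology by blast
  have "fm \<xi> \<in> V" using V xi by blast
  from product_topology_open_contains_basis[OF V(1) this] obtain X where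
    X: "fm \<xi> \<in> Pi\<^sub>E (FG G) X" "\<forall>i. openin (discrete_topology UNIV) (X i)"
       "finite {i. X i \<noteq> topspace (discrete_topology (UNIV::bool set))}" "Pi\<^sub>E (FG G) X \<subseteq> V"
    by blast
  define K where "K = {i. X i \<noteq> topspace (discrete_topology (UNIV::bool set))}"
  define n where "n = Suc (Max (insert 0 (length ` K)))"
  have Kn: "length w < n" if "w \<in> K" for w
  proof -
    have "length w \<le> Max (insert 0 (length ` K))" using X(3) that by (simp add: K_def)
    then show ?thesis by (simp add: n_def)
  qed
  have "cyl n \<xi> \<subseteq> U"
  proof
    fix \<eta> assume "\<eta> \<in> cyl n \<xi>"
    then have e: "\<eta> \<in> Omega G" "ball_n n \<eta> = ball_n n \<xi>" by (auto simp: cyl_def)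
    have "fm \<eta> \<in> Pi\<^sub>E (FG G) X"
    proof (unfold PiE_iff, intro conjI ballI)
      fix w assume w: "w \<in> FG G"
      show "fm \<eta> w \<in> X w"
      proof (cases "w \<in> K")
        case True
        then have "(w \<in> \<eta>) = (w \<in> \<xi>)" using ball_eq_mem[OF e(2)] Kn by fastforce
        then show ?thesis using X(1) w by (auto simp: PiE_iff)
      next
        case False then show ?thesis by (simp add: K_def)
      qed
    qed simp
    then show "\<eta> \<in> U" using V X(4) e by blast
  qed
  moreover have "n \<ge> 1" by (simp add: n_def)
  ultimately show ?thesis by blast
qed

end

context fbg begin

lemma wm_cases':
  assumes "reduced z"
  obtains "z \<noteq> []" "\<tau> = linv (hd z)" "wmult [\<tau>] z = tl z"
        | "wmult [\<tau>] z = \<tau> # z"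
  using push_cases[OF assms, of \<tau>] assms by (auto simp: wmult_single)

lemma adm_winv: assumes "admissible G w" shows "admissible G (winv w)"
  unfolding admissible_def
proof (intro conjI allI impI)
  show "winv w \<noteq> []" using assms by (simp add: admissible_def)
  show "set (winv w) \<subseteq> letters G" using adm_letters[OF assms] by (auto simp: set_winv)
  fix i assume i: "Suc i < length (winv w)"
  let ?L = "length w"
  have j: "Suc (?L - Suc (Suc i)) < ?L" using i by simp
  have "adm_pair G (w ! (?L - Suc (Suc i))) (w ! Suc (?L - Suc (Suc i)))" using adm_nth[OF assms j] .
  then have a: "adm_pair G (linv (w ! Suc (?L - Suc (Suc i)))) (linv (w ! (?L - Suc (Suc i))))"
    using adm_sym by blast
  have e1: "winv w ! i = linv (w ! Suc (?L - Suc (Suc i)))" using i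
    by (simp add: winv_def rev_nth Suc_diff_Suc)
  have e2: "winv w ! Suc i = linv (w ! (?L - Suc (Suc i)))" using i
    by (simp add: winv_def rev_nth)
  show "adm_pair G (winv w ! i) (winv w ! Suc i)" using a e1 e2 by simp
qed

lemma adm_sub:
  assumes "admissible G w" "0 < c" "i + c \<le> length w"
  shows "admissible G (take c (drop i w))"
  unfolding admissible_def
proof (intro conjI allI impI)
  show "take c (drop i w) \<noteq> []" using assms by simp
  show "set (take c (drop i w)) \<subseteq> letters G"
    using adm_letters[OF assms(1)] set_take_subset set_drop_subset by fastforce
  fix j assume j: "Suc j < length (take c (drop i w))"
  then have "Suc (i + j) < length w" by (simp; arith)
  then have "adm_pair G (w ! (i + j)) (w ! Suc (i + j))" using adm_nth[OF assms(1)] by blast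
  then show "adm_pair G (take c (drop i w) ! j) (take c (drop i w) ! Suc j)" using j assms(3) by (simp add: nth_drop)
qed

lemma maximal_full:
  assumes xi: "\<xi> \<in> Omega G" and mx: "maximal_in G (ball_n n \<xi>) \<beta>" and ne: "\<beta> \<noteq> []"
    and a: "adm_pair G (linv (hd \<beta>)) y" and y: "y \<in> letters G"
  shows "length \<beta> = n"
proof (rule ccontr)
  assume nn: "length \<beta> \<noteq> n"
  have b: "\<beta> \<in> \<xi>" "length \<beta> \<le> n" using mx by (auto simp: maximal_in_def ball_iff)
  then have lt: "length \<beta> < n" using nn by simp
  have br: "reduced \<beta>" using Om_red[OF xi b(1)] .
  have "xi_at G \<xi> \<beta> = {linv (hd \<beta>)}"
  proof (intro equalityI subsetI)
    fix \<tau> assume t: "\<tau> \<in> xi_at G \<xi> \<beta>"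
    show "\<tau> \<in> {linv (hd \<beta>)}"
    proof (cases rule: wm_cases'[OF br, of \<tau>])
      case 1 then show ?thesis by simp
    next
      case 2
      have "\<tau> \<in> letters G" "wmult [\<tau>] \<beta> \<in> \<xi>" using t by (auto simp: xi_at_iff)
      moreover have "length (wmult [\<tau>] \<beta>) \<le> n" "length (wmult [\<tau>] \<beta>) > length \<beta>" using 2 lt by auto
      ultimately show ?thesis using mx by (auto simp: maximal_in_def ball_iff)
    qed
  next
    fix \<tau> assume "\<tau> \<in> {linv (hd \<beta>)}"
    then show "\<tau> \<in> xi_at G \<xi> \<beta>" using xi_back[OF xi b(1) ne] by simp
  qed
  then have "local_ok G {linv (hd \<beta>)}" using Om_local[OF xi b(1)] by simp
  then show False using dead_end a y by blast
qed

lemma boundary_iff: "\<sigma> \<in> boundary G B \<longleftrightarrow> (\<exists>\<beta>. maximal_in G B \<beta> \<and> \<beta> \<noteq> [] \<and> \<sigma> = hd \<beta>)"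
  by (auto simp: boundary_def)

lemma link_trans:
  assumes L: "linking_property G"
  shows "theta_top_transitive G"
  unfolding theta_top_transitive_def top_transitive_def
proof (intro allI impI)
  fix U U' assume U: "openin (Omega_top G) U" and U': "openin (Omega_top G) U'"
    and ne: "U \<noteq> {}" and ne': "U' \<noteq> {}"
  obtain \<xi> \<xi>' where x: "\<xi> \<in> U" and x': "\<xi>' \<in> U'" using ne ne' by blast
  have xO: "\<xi> \<in> Omega G" and xO': "\<xi>' \<in> Omega G" using open_sub[OF U] open_sub[OF U'] x x' by auto
  obtain n where n: "n \<ge> 1" "cyl n \<xi> \<subseteq> U" using cyl_sub[OF U x] by blast
  obtain m where m: "m \<ge> 1" "cyl m \<xi>' \<subseteq> U'" using cyl_sub[OF U' x'] by blast
  have "ball_n n \<xi> \<in> balls G" "ball_n m \<xi>' \<in> balls G" using n(1) m(1) xO xO' by (auto simp: balls_def)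
  then have "can_be_linked G (boundary G (ball_n n \<xi>)) (boundary G (ball_n m \<xi>'))"
    using L by (simp add: linking_property_def)
  then obtain \<sigma> \<sigma>' \<alpha> where s: "\<sigma> \<in> boundary G (ball_n n \<xi>)" "\<sigma>' \<in> boundary G (ball_n m \<xi>')"
    and adm: "admissible G ([linv \<sigma>] @ \<alpha> @ [\<sigma>'])"
    unfolding can_be_linked_def by blast
  obtain \<beta> where b: "maximal_in G (ball_n n \<xi>) \<beta>" "\<beta> \<noteq> []" "\<sigma> = hd \<beta>" using s(1) boundary_iff by blast
  obtain \<beta>' where b': "maximal_in G (ball_n m \<xi>') \<beta>'" "\<beta>' \<noteq> []" "\<sigma>' = hd \<beta>'" using s(2) boundary_iff by blast
  let ?lw = "linv (hd \<beta>) # \<alpha> @ [hd \<beta>']"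
  have lw: "admissible G ?lw" using adm b(3) b'(3) by simp
  have let_lw: "?lw ! i \<in> letters G" if "i < length \<alpha> + 2" for i
    using adm_letters[OF lw] that by (metis length_Cons length_append_singleton add_2_eq_Suc' nth_mem subsetD)
  have lb: "length \<beta> = n"
  proof (rule maximal_full[OF xO b(1) b(2)])
    show "adm_pair G (linv (hd \<beta>)) (?lw ! 1)" using adm_nth[OF lw, of 0] by simp
    show "?lw ! 1 \<in> letters G" using let_lw[of 1] by simp
  qed
  have lb': "length \<beta>' = m"
  proof (rule maximal_full[OF xO' b'(1) b'(2)])
    have "adm_pair G (?lw ! length \<alpha>) (?lw ! Suc (length \<alpha>))" using adm_nth[OF lw, of "length \<alpha>"] by simp
    then have "adm_pair G (?lw ! length \<alpha>) (hd \<beta>')" by (simp add: nth_append)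
    then show "adm_pair G (linv (hd \<beta>')) (linv (?lw ! length \<alpha>))" using adm_sym by blast
    show "linv (?lw ! length \<alpha>) \<in> letters G" using let_lw[of "length \<alpha>"] by simp
  qed
  have bin: "\<beta> \<in> \<xi>" and b'in: "\<beta>' \<in> \<xi>'" using b(1) b'(1) by (auto simp: maximal_in_def ball_iff)
  have F: "fwd G \<xi> \<xi>' \<beta> \<beta>' \<alpha> n m"
    by (unfold_locales) (use xO xO' bin lb b(2) b'in lb' b'(2) lw in auto)
  obtain g x where g: "g \<in> FG G" "x \<in> Omega G" "g \<in> x" "ball_n n x = ball_n n \<xi>"
    "theta g x \<in> Omega G" "ball_n m (theta g x) = ball_n m \<xi>'"
    using fwd.fwd_main[OF F] by blast
  have "x \<in> U" using g n(2) by (auto simp: cyl_def)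
  moreover have "x \<in> Omega_dom G (winv g)" using g by (simp add: Omega_dom_def)
  moreover have "theta g x \<in> U'" using g m(2) by (auto simp: cyl_def)
  ultimately show "\<exists>g\<in>FG G. theta g ` (U \<inter> Omega_dom G (winv g)) \<inter> U' \<noteq> {}"
    using g(1) by blast
qed

end

context fbg begin

lemma mem_theta: "A \<subseteq> FG G \<Longrightarrow> y \<in> theta g A \<longleftrightarrow> reduced y \<and> red (y @ g) \<in> A"
  using mem_tr[OF FG_reduced, of A y "winv g"] by (simp add: theta_tr)

lemma distinguish: "f \<noteq> h \<Longrightarrow> (SOME w. (w \<in> f) \<noteq> (w \<in> h)) \<in> f \<longleftrightarrow> (SOME w. (w \<in> f) \<noteq> (w \<in> h)) \<notin> h"
proof -
  assume "f \<noteq> h"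
  then have "\<exists>w. (w \<in> f) \<noteq> (w \<in> h)" by blast
  from someI_ex[OF this] show ?thesis by blast
qed

lemma trans_link:
  assumes NI: "no_isolated_points (Omega_top G)" and T: "theta_top_transitive G"
  shows "linking_property G"
  unfolding linking_property_def
proof (intro ballI)
  fix B B' assume "B \<in> balls G" "B' \<in> balls G"
  then obtain n \<xi> m \<xi>' where B: "B = ball_n n \<xi>" "n \<ge> 1" "\<xi> \<in> Omega G"
    and B': "B' = ball_n m \<xi>'" "m \<ge> 1" "\<xi>' \<in> Omega G" by (auto simp: balls_def)
  define Sg where "Sg = {g \<in> \<xi>. length g < m + n}"
  have finSg: "finite Sg"
  proof (rule finite_subset[OF _ finite_short[of "m + n"]])
    show "Sg \<subseteq> {w \<in> FG G. length w \<le> m + n}" using Om_FG[OF B(3)] by (auto simp: Sg_def)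
  qed
  define F where "F = (\<lambda>g. theta g \<xi>) ` Sg"
  have finF: "finite F" using finSg by (simp add: F_def)
  define d where "d f = (SOME w. (w \<in> f) \<noteq> (w \<in> \<xi>'))" for f
  define K where "K = max m (Max (insert 0 ((\<lambda>f. length (d f)) ` (F - {\<xi>'}))))"
  have Kd: "length (d f) \<le> K" if "f \<in> F - {\<xi>'}" for f
  proof -
    have "length (d f) \<le> Max (insert 0 ((\<lambda>f. length (d f)) ` (F - {\<xi>'})))"
      using finF that by (intro Max_ge) auto
    then show ?thesis by (simp add: K_def)
  qed
  have oK: "openin (Omega_top G) (cyl K \<xi>')" using cyl_open[OF B'(3)] .
  have "\<not> openin (Omega_top G) {\<xi>'}" using NI B'(3) topspace_Om by (simp add: no_isolated_points_def)
  then have "cyl K \<xi>' \<noteq> {\<xi>'}" using oK by auto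
  then obtain \<xi>1 where x1: "\<xi>1 \<in> cyl K \<xi>'" "\<xi>1 \<noteq> \<xi>'" using cyl_self[OF B'(3), of K] by blast
  have x1O: "\<xi>1 \<in> Omega G" using x1 by (simp add: cyl_def)
  have x1m: "ball_n m \<xi>1 = ball_n m \<xi>'" using x1(1) cyl_mono[of m K \<xi>'] by (auto simp: K_def cyl_def)
  have x1F: "\<xi>1 \<notin> F"
  proof
    assume "\<xi>1 \<in> F"
    then have "length (d \<xi>1) \<le> K" using Kd x1(2) by simp
    then have "(d \<xi>1 \<in> \<xi>1) = (d \<xi>1 \<in> \<xi>')" using x1(1) ball_eq_mem by (auto simp: cyl_def)
    moreover have "(d \<xi>1 \<in> \<xi>1) \<noteq> (d \<xi>1 \<in> \<xi>')" using distinguish[OF x1(2)] by (simp add: d_def)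
    ultimately show False by simp
  qed
  define d1 where "d1 f = (SOME w. (w \<in> f) \<noteq> (w \<in> \<xi>1))" for f
  define N0 where "N0 = Max (insert 0 ((\<lambda>f. length (d1 f)) ` F))"
  define N where "N = N0 + m + n"
  have N0d: "length (d1 f) \<le> N0" if "f \<in> F" for f
    unfolding N0_def using finF that by (intro Max_ge) auto
  have oU: "openin (Omega_top G) (cyl N \<xi>)" using cyl_open[OF B(3)] .
  have oU': "openin (Omega_top G) (cyl N \<xi>1)" using cyl_open[OF x1O] .
  have neU: "cyl N \<xi> \<noteq> {}" "cyl N \<xi>1 \<noteq> {}" using cyl_self[OF B(3)] cyl_self[OF x1O] by blast+
  have T': "\<And>U U'. openin (Omega_top G) U \<Longrightarrow> openin (Omega_top G) U' \<Longrightarrow> U \<noteq> {} \<Longrightarrow> U' \<noteq> {} \<Longrightarrow>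
        \<exists>g\<in>FG G. theta g ` (U \<inter> Omega_dom G (winv g)) \<inter> U' \<noteq> {}"
    using T unfolding theta_top_transitive_def top_transitive_def by blast
  obtain g where gFG: "g \<in> FG G" and tt: "theta g ` (cyl N \<xi> \<inter> Omega_dom G (winv g)) \<inter> cyl N \<xi>1 \<noteq> {}"
    using T'[OF oU oU' neU] by blast
  then obtain \<zeta> where z0: "\<zeta> \<in> cyl N \<xi> \<inter> Omega_dom G (winv g)" "theta g \<zeta> \<in> cyl N \<xi>1"
    by blast
  then have z: "\<zeta> \<in> cyl N \<xi>" "g \<in> \<zeta>" "theta g \<zeta> \<in> cyl N \<xi>1" by (simp_all add: Omega_dom_def)
  have zO: "\<zeta> \<in> Omega G" and zN: "ball_n N \<zeta> = ball_n N \<xi>" using z(1) by (auto simp: cyl_def)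
  let ?\<eta> = "theta g \<zeta>"
  have eN: "ball_n N ?\<eta> = ball_n N \<xi>1" using z(3) by (simp add: cyl_def)
  have gr: "reduced g" using gFG by (simp add: FG_iff)
  have long: "m + n \<le> length g"
  proof (rule ccontr)
    assume "\<not> m + n \<le> length g"
    then have gl: "length g < m + n" by simp
    have "g \<in> \<xi>" using ball_eq_mem[OF zN, of g] z(2) gl by (simp add: N_def)
    then have fF: "theta g \<xi> \<in> F" using gl by (auto simp: F_def Sg_def)
    then have fne: "theta g \<xi> \<noteq> \<xi>1" using x1F by auto
    let ?w = "d1 (theta g \<xi>)"
    have wl: "length ?w \<le> N0" using N0d[OF fF] .
    have e1: "(?w \<in> \<xi>1) = (?w \<in> ?\<eta>)" using ball_eq_mem[OF eN, of ?w] wl by (simp add: N_def)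
    have "length (red (?w @ g)) \<le> N" using length_red_le[of "?w @ g"] wl gl by (simp add: N_def)
    then have "(red (?w @ g) \<in> \<zeta>) = (red (?w @ g) \<in> \<xi>)" using ball_eq_mem[OF zN] by blast
    then have e2: "(?w \<in> ?\<eta>) = (?w \<in> theta g \<xi>)"
      using mem_theta[OF Om_FG[OF zO]] mem_theta[OF Om_FG[OF B(3)]] by simp
    have "(?w \<in> theta g \<xi>) \<noteq> (?w \<in> \<xi>1)" using distinguish[OF fne] by (simp add: d1_def)
    then show False using e1 e2 by simp
  qed
  define k where "k = length g"
  have gne: "g \<noteq> []" using long B(2) by auto
  have gadm: "admissible G g" using Om_admissible[OF zO z(2) gne] .
  define \<beta> where "\<beta> = drop (k - n) g"
  have bz: "\<beta> \<in> \<zeta>" using Om_drop[OF zO z(2)] by (simp add: \<beta>_def)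
  have bl: "length \<beta> = n" using long by (simp add: \<beta>_def k_def)
  have bB: "\<beta> \<in> B"
  proof -
    have "ball_n n \<zeta> = ball_n n \<xi>" using ball_mono[OF _ zN, of n] by (simp add: N_def)
    then show ?thesis using bz bl B(1) by (auto simp: ball_n_def)
  qed
  have bmax: "maximal_in G B \<beta>" using bB bl B(1) by (auto simp: maximal_in_def ball_iff)
  have bne: "\<beta> \<noteq> []" using bl B(2) by auto
  have hb: "hd \<beta> = g ! (k - n)" using long B(2) by (simp add: \<beta>_def k_def hd_drop_conv_nth)
  define \<beta>' where "\<beta>' = winv (take m g)"
  have b'eta: "\<beta>' \<in> ?\<eta>"
  proof -
    have "red (\<beta>' @ g) = red (drop m g)"
      using red_cancel'[of "take m g" "drop m g"] by (simp add: \<beta>'_def)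
    also have "\<dots> = drop m g" using reduced_drop[OF gr] by (simp add: red_id)
    finally have "red (\<beta>' @ g) \<in> \<zeta>" using Om_drop[OF zO z(2)] by simp
    moreover have "reduced \<beta>'" using reduced_take[OF gr] by (simp add: \<beta>'_def)
    ultimately show ?thesis using mem_theta[OF Om_FG[OF zO]] by simp
  qed
  have b'l: "length \<beta>' = m" using long by (simp add: \<beta>'_def)
  have b'B: "\<beta>' \<in> B'"
  proof -
    have "ball_n m ?\<eta> = ball_n m \<xi>1" using ball_mono[OF _ eN, of m] by (simp add: N_def)
    then show ?thesis using b'eta b'l B'(1) x1m by (auto simp: ball_n_def)
  qed
  have b'max: "maximal_in G B' \<beta>'" using b'B b'l B'(1) by (auto simp: maximal_in_def ball_iff)
  have b'ne: "\<beta>' \<noteq> []" using b'l B'(2) by auto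
  have hb': "hd \<beta>' = linv (g ! (m - 1))"
  proof -
    have "take m g \<noteq> []" using long B'(2) gne by simp
    then have "hd \<beta>' = linv (last (take m g))" by (simp add: \<beta>'_def hd_winv)
    also have "last (take m g) = take m g ! (length (take m g) - 1)" using \<open>take m g \<noteq> []\<close> by (rule last_conv_nth)
    also have "\<dots> = g ! (m - 1)" using long B'(2) by simp
    finally show ?thesis .
  qed
  define c where "c = k - n - m"
  define \<alpha> where "\<alpha> = winv (take c (drop m g))"
  have split: "take (Suc (Suc c)) (drop (m - 1) g) = g ! (m - 1) # take c (drop m g) @ [g ! (k - n)]"
  proof -
    have m1: "m - 1 < length g" using long B'(2) by simp
    have "drop (m - 1) g = g ! (m - 1) # drop m g"
      using Cons_nth_drop_Suc[OF m1] B'(2) by simp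
    moreover have "take (Suc c) (drop m g) = take c (drop m g) @ [g ! (k - n)]"
    proof -
      have "c < length (drop m g)" using long B(2) by (simp add: c_def k_def)
      then have "take (Suc c) (drop m g) = take c (drop m g) @ [drop m g ! c]" by (rule take_Suc_conv_app_nth)
      moreover have "drop m g ! c = g ! (k - n)" using long by (simp add: c_def k_def)
      ultimately show ?thesis by simp
    qed
    ultimately show ?thesis by simp
  qed
  have wadm: "admissible G ([linv (hd \<beta>)] @ \<alpha> @ [hd \<beta>'])"
  proof -
    have "admissible G (take (Suc (Suc c)) (drop (m - 1) g))"
      using adm_sub[OF gadm] long B(2) B'(2) by (simp add: c_def k_def)
    then have "admissible G (winv (take (Suc (Suc c)) (drop (m - 1) g)))" by (rule adm_winv)
    then show ?thesis using split hb hb' by (simp add: \<alpha>_def)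
  qed
  have aadm: "\<alpha> = [] \<or> admissible G \<alpha>"
  proof (cases "c = 0")
    case True then show ?thesis by (simp add: \<alpha>_def)
  next
    case False
    have "admissible G (take c (drop m g))" using adm_sub[OF gadm] False long by (simp add: c_def k_def)
    then show ?thesis using adm_winv by (simp add: \<alpha>_def)
  qed
  have "hd \<beta> \<in> boundary G B" using bmax bne boundary_iff by blast
  moreover have "hd \<beta>' \<in> boundary G B'" using b'max b'ne boundary_iff by blast
  ultimately show "can_be_linked G (boundary G B) (boundary G B')"
    unfolding can_be_linked_def using wadm aadm by blast
qed

end

theorem lemma9:
  fixes G :: "('v, 'e) sep_graph"
  assumes "finite_bipartite G"
  shows "(linking_property G \<longrightarrow> theta_top_transitive G) \<and>
         (no_isolated_points (Omega_top G) \<longrightarrow> theta_top_transitive G \<longrightarrow> linking_property G)"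
proof -
  interpret fbg G using assms by unfold_locales
  show ?thesis using link_trans trans_link by blast
qed

end
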